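(* Let $(\xi,\eta)\in\mathbb{R}^2$ be such that $1,\xi,\eta$ are linearly independent over $\mathbb{Q}$, $f(\xi,\eta)=0$ for some irreducible $f\in\mathbb{Q}[x,y]$ of degree $2$ with $f\notin\mathbb{Q}[x]$, and there is $\lambda>1/2$ such that for every sufficiently large $X\ge1$ the system $|x_0|\le X$, $|x_0\xi-x_1|\le X^{-\lambda}$, $|x_0\eta-x_2|\le X^{-\lambda}$ has a non-zero solution in $\mathbb{Z}^3$. Let $X_1<X_2<\cdots$ be as in the context. Then there is a constant $c>0$ independent of $i$ such that $X_{i+1}^{\lambda}\le c\,X_i$ for each $i\ge1$.
   Context: For $\mathbf{x}=(x_0,x_1,x_2)\in\mathbb{Z}^3$ put $\delta(\mathbf{x})=\max\{|x_0\xi-x_1|,|x_0\eta-x_2|\}$. For $X\ge1$, $\Delta(X)$ is the minimum of $\delta(\mathbf{x})$ over all $\mathbf{x}\in\mathbb{Z}^3$ with $1\le x_0\le X$; $\Delta$ is non-increasing, tends to $0$ and is constant between consecutive integers. Let $X_1=1<X_2<X_3<\cdots$ be the number $1$ together with the points of discontinuity of $\Delta$, listed in increasing order. *)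

theory Defs
  imports "HOL-Analysis.Analysis" "HOL-Computational_Algebra.Polynomial_Factorial"
begin

text \<open>Bivariate polynomials over Q are represented as rat poly poly:
  the outer variable is y, the inner variable (of the coefficients) is x.\<close>

definition total_degree :: "rat poly poly \<Rightarrow> nat" where
  "total_degree f = Max ({0} \<union> {i + degree (coeff f i) | i. coeff f i \<noteq> 0})"

definition eval2 :: "rat poly poly \<Rightarrow> real \<Rightarrow> real \<Rightarrow> real" where
  "eval2 f xi eta = poly (map_poly (\<lambda>c. poly (map_poly of_rat c) xi) f) eta"

definition in_Qx :: "rat poly poly \<Rightarrow> bool" where
  "in_Qx f \<longleftrightarrow> degree f = 0"

definition lin_indep_1 :: "real \<Rightarrow> real \<Rightarrow> bool" where
  "lin_indep_1 xi eta \<longleftrightarrow>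
     (\<forall>a b c :: rat. of_rat a + of_rat b * xi + of_rat c * eta = 0 \<longrightarrow> a = 0 \<and> b = 0 \<and> c = 0)"

definition delta3 :: "real \<Rightarrow> real \<Rightarrow> int \<Rightarrow> int \<Rightarrow> int \<Rightarrow> real" where
  "delta3 xi eta x0 x1 x2 = max \<bar>of_int x0 * xi - of_int x1\<bar> \<bar>of_int x0 * eta - of_int x2\<bar>"

definition Delta :: "real \<Rightarrow> real \<Rightarrow> real \<Rightarrow> real" where
  "Delta xi eta X = Inf {delta3 xi eta x0 x1 x2 | x0 x1 x2. 1 \<le> x0 \<and> of_int x0 \<le> X}"

text \<open>The set {X_1, X_2, ...}: the number 1 together with the points of discontinuity of Delta
  (on its domain X \<ge> 1).\<close>
definition Xset :: "real \<Rightarrow> real \<Rightarrow> real set" where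
  "Xset xi eta = {1} \<union> {X. 1 < X \<and> \<not> isCont (Delta xi eta) X}"

end

theory Submission
  imports Defs
begin

fun dt :: "'a::comm_ring_1 \<times> 'a \<times> 'a \<Rightarrow> 'a \<times> 'a \<times> 'a \<Rightarrow> 'a" where
  "dt (a0,a1,a2) (b0,b1,b2) = a0*b0 + a1*b1 + a2*b2"

fun cr :: "'a::comm_ring_1 \<times> 'a \<times> 'a \<Rightarrow> 'a \<times> 'a \<times> 'a \<Rightarrow> 'a \<times> 'a \<times> 'a" where
  "cr (a0,a1,a2) (b0,b1,b2) = (a1*b2 - a2*b1, a2*b0 - a0*b2, a0*b1 - a1*b0)"

fun vadd :: "'a::comm_ring_1 \<times> 'a \<times> 'a \<Rightarrow> 'a \<times> 'a \<times> 'a \<Rightarrow> 'a \<times> 'a \<times> 'a" where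
  "vadd (a0,a1,a2) (b0,b1,b2) = (a0+b0, a1+b1, a2+b2)"

fun smul :: "'a::comm_ring_1 \<Rightarrow> 'a \<times> 'a \<times> 'a \<Rightarrow> 'a \<times> 'a \<times> 'a" where
  "smul k (a0,a1,a2) = (k*a0, k*a1, k*a2)"

definition inspan :: "int \<times> int \<times> int \<Rightarrow> int \<times> int \<times> int \<Rightarrow> int \<times> int \<times> int \<Rightarrow> bool" where
  "inspan x u v \<longleftrightarrow> (\<exists>a b. x = vadd (smul a u) (smul b v))"

lemma lagrange: "dt (cr u v) (cr u v) = dt u u * dt v v - (dt u v)^2"
  for u v :: "'a::comm_ring_1 \<times> 'a \<times> 'a"
  by (cases u; cases v) (simp add: algebra_simps power2_eq_square)

lemma dt_self_nonneg: "0 \<le> dt u u" for u :: "int \<times> int \<times> int"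
  by (cases u) simp

lemma red_ord:
  fixes u v x :: "int \<times> int \<times> int"
  shows "dt u u \<le> dt v v \<Longrightarrow> cr u v \<noteq> (0,0,0) \<Longrightarrow> inspan x u v \<Longrightarrow>
    \<exists>u' v'. inspan x u' v' \<and> dt (cr u' v') (cr u' v') = dt (cr u v) (cr u v) \<and>
       dt u' u' \<le> dt v' v' \<and> 2 * \<bar>dt u' v'\<bar> \<le> dt u' u'"
proof (induction "nat (dt u u + dt v v)" arbitrary: u v rule: less_induct)
  case less
  show ?case
  proof (cases "2 * \<bar>dt u v\<bar> \<le> dt u u")
    case True
    then show ?thesis using less.prems by blast
  next
    case False
    define s where "s = sgn (dt u v)"
    define v1 where "v1 = vadd v (smul (- s) u)"
    have s1: "s * dt u v = \<bar>dt u v\<bar>" "s * s = 1" using False dt_self_nonneg[of u]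
      by (auto simp: s_def sgn_if)
    have d1: "dt v1 v1 = dt v v - 2 * \<bar>dt u v\<bar> + dt u u"
      using s1 unfolding v1_def by (cases u; cases v) (simp add: algebra_simps power2_eq_square)
    have c1: "cr u v1 = cr u v" unfolding v1_def by (cases u; cases v) (simp add: algebra_simps)
    have c2: "dt (cr v1 u) (cr v1 u) = dt (cr u v) (cr u v)" unfolding v1_def
      by (cases u; cases v) (simp add: algebra_simps)
    have sp1: "inspan x u v1"
    proof -
      obtain a b where "x = vadd (smul a u) (smul b v)" using less.prems(3) inspan_def by auto
      then have "x = vadd (smul (a + b * s) u) (smul b v1)" unfolding v1_def
        by (cases u; cases v) (simp add: algebra_simps)
      then show ?thesis unfolding inspan_def by blast
    qed
    have sp2: "inspan x v1 u"
    proof -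
      obtain a b where "x = vadd (smul a u) (smul b v1)" using sp1 inspan_def by auto
      then have "x = vadd (smul b v1) (smul a u)"
        by (cases u; cases v1) (simp add: algebra_simps)
      then show ?thesis unfolding inspan_def by blast
    qed
    have lt: "nat (dt u u + dt v1 v1) < nat (dt u u + dt v v)"
      using d1 False dt_self_nonneg[of u] dt_self_nonneg[of v1] by simp
    have lt2: "nat (dt v1 v1 + dt u u) < nat (dt u u + dt v v)"
      using lt by simp
    have cz: "cr u v1 \<noteq> (0,0,0)" using c1 less.prems by simp
    have cz2: "cr v1 u \<noteq> (0,0,0)" using cz by (cases u; cases v1) (auto simp: algebra_simps)
    show ?thesis
    proof (cases "dt u u \<le> dt v1 v1")
      case True
      from less.hyps[OF lt True cz sp1] show ?thesis using c1 by simp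
    next
      case F2: False
      from less.hyps[OF lt2 _ cz2 sp2] F2 show ?thesis using c2 by simp
    qed
  qed
qed

lemma reduce:
  fixes u v :: "int \<times> int \<times> int"
  assumes "cr u v \<noteq> (0,0,0)"
  shows "\<exists>u' v'. inspan u u' v' \<and> dt (cr u' v') (cr u' v') = dt (cr u v) (cr u v) \<and>
       dt u' u' \<le> dt v' v' \<and> 2 * \<bar>dt u' v'\<bar> \<le> dt u' u'"
proof (cases "dt u u \<le> dt v v")
  case True
  have "inspan u u v" unfolding inspan_def
    by (rule exI[of _ 1], rule exI[of _ 0]) (cases u; cases v; simp)
  then show ?thesis using red_ord[OF True assms] by blast
next
  case False
  have "inspan u v u" unfolding inspan_def
    by (rule exI[of _ 0], rule exI[of _ 1]) (cases u; cases v; simp)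
  moreover have "cr v u \<noteq> (0,0,0)" using assms by (cases u; cases v) (auto simp: algebra_simps)
  moreover have "dt (cr v u) (cr v u) = dt (cr u v) (cr u v)"
    by (cases u; cases v) (simp add: algebra_simps)
  ultimately show ?thesis using red_ord[of v u u] False by auto
qed


fun qf :: "'a::comm_ring_1 \<times> 'a \<times> 'a \<times> 'a \<times> 'a \<times> 'a \<Rightarrow> 'a \<times> 'a \<times> 'a \<Rightarrow> 'a" where
  "qf (p00,p01,p02,p11,p12,p22) (z0,z1,z2) =
     p00 * z0 * z0 + p01 * z0 * z1 + p02 * z0 * z2 + p11 * z1 * z1 + p12 * z1 * z2 + p22 * z2 * z2"

fun bf :: "'a::comm_ring_1 \<times> 'a \<times> 'a \<times> 'a \<times> 'a \<times> 'a \<Rightarrow> 'a \<times> 'a \<times> 'a \<Rightarrow> 'a \<times> 'a \<times> 'a \<Rightarrow> 'a" where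
  "bf (p00,p01,p02,p11,p12,p22) (u0,u1,u2) (v0,v1,v2) =
     2 * p00 * u0 * v0 + p01 * (u0 * v1+u1 * v0) + p02 * (u0 * v2+u2 * v0) + 2 * p11 * u1 * v1
      + p12 * (u1 * v2+u2 * v1) + 2 * p22 * u2 * v2"

fun of3 :: "int \<times> int \<times> int \<Rightarrow> real \<times> real \<times> real" where
  "of3 (a,b,c) = (of_int a, of_int b, of_int c)"

fun of6 :: "int \<times> int \<times> int \<times> int \<times> int \<times> int \<Rightarrow> real \<times> real \<times> real \<times> real \<times> real \<times> real" where
  "of6 (a,b,c,d,e,f) = (of_int a, of_int b, of_int c, of_int d, of_int e, of_int f)"

lemma qf_lin2: "qf p (vadd (smul a u) (smul b v)) = a^2  *  qf p u + a * b * bf p u v + b^2  *  qf p v"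
  by (cases p; cases u; cases v) (simp add: algebra_simps power2_eq_square)

lemma qf_lin3: "qf p (vadd (vadd (smul a u) (smul b v)) (smul c w)) =
   a^2  *  qf p u + b^2  *  qf p v + c^2  *  qf p w + a * b * bf p u v + a * c * bf p u w + b * c * bf p v w"
  by (cases p; cases u; cases v; cases w) (simp add: algebra_simps power2_eq_square)

lemma qf_smul: "qf p (smul k z) = k^2  *  qf p z"
  by (cases p; cases z) (simp add: algebra_simps power2_eq_square)

lemma gibbs: "smul (dt (cr u v) (cr u v)) z =
   vadd (vadd (smul (dt z (cr v (cr u v))) u) (smul (dt z (cr (cr u v) u)) v)) (smul (dt (cr u v) z) (cr u v))"
  by (cases u; cases v; cases z) (simp add: algebra_simps)

lemma of3_cr: "of3 (cr u v) = cr (of3 u) (of3 v)" by (cases u; cases v) simp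
lemma of3_dt: "of_int (dt u v) = dt (of3 u) (of3 v)" by (cases u; cases v) simp
lemma of3_vadd: "of3 (vadd u v) = vadd (of3 u) (of3 v)" by (cases u; cases v) simp
lemma of3_smul: "of3 (smul k v) = smul (of_int k) (of3 v)" by (cases v) simp
lemma of6_qf: "of_int (qf p z) = qf (of6 p) (of3 z)" by (cases p; cases z) simp
lemma of6_bf: "of_int (bf p u v) = bf (of6 p) (of3 u) (of3 v)" by (cases p; cases u; cases v) simp

lemma li_int:
  assumes "lin_indep_1 xi eta" "of_int a + of_int b  *  xi + of_int c  *  eta = 0"
  shows "a = 0 \<and> b = 0 \<and> c = 0"
  using assms unfolding lin_indep_1_def
  by (metis of_int_eq_0_iff of_rat_of_int_eq)

lemma dt_omega: "dt (of3 n) (1, xi, eta) = of_int (fst n) + of_int (fst (snd n))  *  xi + of_int (snd (snd n))  *  eta"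
  by (cases n) (simp add: algebra_simps)

lemma dt_pos: "(z::int\<times>int\<times>int) \<noteq> (0,0,0) \<Longrightarrow> 0 < dt z z"
proof (cases z)
  case (fields a b c)
  assume "z \<noteq> (0,0,0)"
  then have "a \<noteq> 0 \<or> b \<noteq> 0 \<or> c \<noteq> 0" using fields by auto
  moreover have "0 \<le> a * a" "0 \<le> b * b" "0 \<le> c * c" by auto
  moreover have "a \<noteq> 0 \<Longrightarrow> 0 < a * a" "b \<noteq> 0 \<Longrightarrow> 0 < b * b" "c \<noteq> 0 \<Longrightarrow> 0 < c * c"
    by (auto simp: zero_less_mult_iff)
  ultimately have "0 < a * a + b * b + c * c" by smt
  then show ?thesis using fields by simp
qed

lemma nondeg:
  fixes p :: "int \<times> int \<times> int \<times> int \<times> int \<times> int" and u v :: "int \<times> int \<times> int"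
  assumes li: "lin_indep_1 xi eta"
    and pnz: "p \<noteq> (0,0,0,0,0,0)"
    and root: "qf (of6 p) (1,xi,eta) = 0"
    and nz: "cr u v \<noteq> (0,0,0)"
    and h: "qf p u = 0" "bf p u v = 0" "qf p v = 0"
  shows False
proof -
  define n where "n = cr u v"
  define N where "N = dt n n"
  define Li where "Li = vadd (vadd (smul (qf p n) n) (smul (bf p u n) (cr v n))) (smul (bf p v n) (cr n u))"
  have Npos: "0 < N" using dt_pos nz unfolding N_def n_def by auto
  have key: "(of_int N)^2  *  qf (of6 p) z = dt (of3 n) z  *  dt z (of3 Li)" for z
  proof -
    let ?P = "of6 p" and ?U = "of3 u" and ?V = "of3 v" and ?n = "of3 n"
    have nn: "?n = cr ?U ?V" unfolding n_def by (simp add: of3_cr)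
    have NN: "of_int N = dt ?n ?n" unfolding N_def by (simp add: of3_dt)
    have "(of_int N)^2  *  qf ?P z = qf ?P (smul (of_int N) z)" by (simp add: qf_smul)
    also have "smul (of_int N) z = vadd (vadd (smul (dt z (cr ?V ?n)) ?U) (smul (dt z (cr ?n ?U)) ?V)) (smul (dt ?n z) ?n)"
      unfolding NN nn by (rule gibbs)
    also have "qf ?P \<dots> = (dt ?n z)^2  *  qf ?P ?n + dt z (cr ?V ?n)  *  dt ?n z  *  bf ?P ?U ?n
         + dt z (cr ?n ?U)  *  dt ?n z  *  bf ?P ?V ?n"
      unfolding qf_lin3 using h by (simp add: of6_qf[symmetric] of6_bf[symmetric])
    also have "\<dots> = dt ?n z  *  dt z (of3 Li)"
      unfolding Li_def of3_vadd of3_smul of3_cr of6_qf of6_bf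
      by (cases z; cases "of3 n"; cases "of3 u"; cases "of3 v") (simp add: algebra_simps power2_eq_square)
    finally show ?thesis .
  qed
  have g0: "dt (of3 n) (1,xi,eta) \<noteq> 0"
  proof
    assume "dt (of3 n) (1,xi,eta) = 0"
    then have "fst n = 0 \<and> fst (snd n) = 0 \<and> snd (snd n) = 0"
      using li_int[OF li] dt_omega[of n xi eta] by simp
    then show False using nz unfolding n_def by (cases "cr u v") simp
  qed
  have "dt (1,xi,eta) (of3 Li) = 0" using key[of "(1,xi,eta)"] root g0 by simp
  then have "dt (of3 Li) (1,xi,eta) = 0" by (cases Li) (simp add: algebra_simps)
  then have L0: "Li = (0,0,0)" using li_int[OF li] dt_omega[of Li xi eta]
    by (cases Li) simp
  have allz: "qf (of6 p) z = 0" for z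
    using key[of z] L0 Npos by (cases z) simp
  obtain p00 p01 p02 p11 p12 p22 where pp: "p = (p00,p01,p02,p11,p12,p22)" by (cases p) blast
  have "p00 = 0" using allz[of "(1,0,0)"] pp by simp
  moreover have "p11 = 0" using allz[of "(0,1,0)"] pp by simp
  moreover have "p22 = 0" using allz[of "(0,0,1)"] pp by simp
  moreover have "p01 = 0" using allz[of "(1,1,0)"] allz[of "(1,0,0)"] allz[of "(0,1,0)"] pp by simp
  moreover have "p02 = 0" using allz[of "(1,0,1)"] allz[of "(1,0,0)"] allz[of "(0,0,1)"] pp by simp
  moreover have "p12 = 0" using allz[of "(0,1,1)"] allz[of "(0,1,0)"] allz[of "(0,0,1)"] pp by simp
  ultimately show False using pnz pp by simp
qed


fun sabs :: "int \<times> int \<times> int \<times> int \<times> int \<times> int \<Rightarrow> int" where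
  "sabs (a,b,c,d,e,f) = \<bar>a\<bar> + \<bar>b\<bar> + \<bar>c\<bar> + \<bar>d\<bar> + \<bar>e\<bar> + \<bar>f\<bar>"

lemma root_bound:
  fixes A B C a b :: int
  assumes eq: "A * a^2 + B * a * b + C * b^2 = 0" and cop: "coprime a b"
    and nz: "\<not> (A = 0 \<and> B = 0 \<and> C = 0)" and a0: "a \<noteq> 0" and b0: "b \<noteq> 0"
  shows "\<bar>a\<bar> \<le> max \<bar>B\<bar> \<bar>C\<bar> \<and> \<bar>b\<bar> \<le> max \<bar>A\<bar> \<bar>B\<bar>"
proof
  have "C * b^2 = a * (- (A * a + B * b))" using eq
    by (simp add: algebra_simps power2_eq_square)
  then have "a dvd C * b^2" by simp
  then have aC: "a dvd C" using cop by (simp add: coprime_dvd_mult_left_iff)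
  show "\<bar>a\<bar> \<le> max \<bar>B\<bar> \<bar>C\<bar>"
  proof (cases "C = 0")
    case False then show ?thesis using dvd_imp_le_int[OF False aC] by simp
  next
    case True
    then have "a * (A * a + B * b) = 0" using eq by (simp add: algebra_simps power2_eq_square)
    then have e2: "A * a = - (B * b)" using a0 by simp
    then have "a dvd B * b" by (metis dvd_minus_iff dvd_triv_right)
    then have aB: "a dvd B" using cop by (simp add: coprime_dvd_mult_left_iff)
    have "B \<noteq> 0" using e2 a0 nz True by auto
    then show ?thesis using dvd_imp_le_int[OF _ aB] by simp
  qed
next
  have "A * a^2 = b * (- (B * a + C * b))" using eq
    by (simp add: algebra_simps power2_eq_square)
  then have "b dvd A * a^2" by simp
  then have bA: "b dvd A" using cop by (simp add: coprime_dvd_mult_left_iff coprime_commute)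
  show "\<bar>b\<bar> \<le> max \<bar>A\<bar> \<bar>B\<bar>"
  proof (cases "A = 0")
    case False then show ?thesis using dvd_imp_le_int[OF False bA] by simp
  next
    case True
    then have "b * (B * a + C * b) = 0" using eq by (simp add: algebra_simps power2_eq_square)
    then have e2: "C * b = - (B * a)" using b0 by simp
    then have "b dvd B * a" by (metis dvd_minus_iff dvd_triv_right)
    then have bB: "b dvd B" using cop by (simp add: coprime_dvd_mult_left_iff coprime_commute)
    have "B \<noteq> 0" using e2 b0 nz True by auto
    then show ?thesis using dvd_imp_le_int[OF _ bB] by simp
  qed
qed

lemma tb: "\<bar>x\<bar> \<le> P \<Longrightarrow> \<bar>y\<bar> \<le> R \<Longrightarrow> \<bar>c * x * y\<bar> \<le> \<bar>c\<bar> * (P * R)" for x y c P R :: real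
proof -
  assume h: "\<bar>x\<bar> \<le> P" "\<bar>y\<bar> \<le> R"
  have "\<bar>x\<bar> * \<bar>y\<bar> \<le> P * R" using h by (intro mult_mono) auto
  then have "\<bar>c\<bar> * (\<bar>x\<bar> * \<bar>y\<bar>) \<le> \<bar>c\<bar> * (P * R)" by (intro mult_left_mono) auto
  then show ?thesis by (simp add: abs_mult mult.assoc)
qed

lemma sabs_real: "real_of_int (sabs p) = (case of6 p of (a,b,c,d,e,f) \<Rightarrow> \<bar>a\<bar> + \<bar>b\<bar> + \<bar>c\<bar> + \<bar>d\<bar> + \<bar>e\<bar> + \<bar>f\<bar>)"
  by (cases p) simp

lemma qf_boundr:
  assumes "\<bar>u0\<bar> \<le> P" "\<bar>u1\<bar> \<le> P" "\<bar>u2\<bar> \<le> P"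
  shows "\<bar>qf (of6 p) (u0,u1,u2)\<bar> \<le> real_of_int (sabs p) * (P * P)"
proof -
  obtain a b c d e f where pp: "p = (a,b,c,d,e,f)" by (cases p) blast
  have t1: "\<bar>of_int a * u0 * u0\<bar> \<le> \<bar>of_int a\<bar> * (P * P)" using tb assms by blast
  have t2: "\<bar>of_int b * u0 * u1\<bar> \<le> \<bar>of_int b\<bar> * (P * P)" using tb assms by blast
  have t3: "\<bar>of_int c * u0 * u2\<bar> \<le> \<bar>of_int c\<bar> * (P * P)" using tb assms by blast
  have t4: "\<bar>of_int d * u1 * u1\<bar> \<le> \<bar>of_int d\<bar> * (P * P)" using tb assms by blast
  have t5: "\<bar>of_int e * u1 * u2\<bar> \<le> \<bar>of_int e\<bar> * (P * P)" using tb assms by blast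
  have t6: "\<bar>of_int f * u2 * u2\<bar> \<le> \<bar>of_int f\<bar> * (P * P)" using tb assms by blast
  show ?thesis using t1 t2 t3 t4 t5 t6 unfolding pp
    by (simp add: algebra_simps abs_le_iff)
qed

lemma bf_boundr:
  assumes "\<bar>u0\<bar> \<le> P" "\<bar>u1\<bar> \<le> P" "\<bar>u2\<bar> \<le> P" "\<bar>v0\<bar> \<le> R" "\<bar>v1\<bar> \<le> R" "\<bar>v2\<bar> \<le> R"
  shows "\<bar>bf (of6 p) (u0,u1,u2) (v0,v1,v2)\<bar> \<le> 2 * real_of_int (sabs p) * (P * R)"
proof -
  obtain a b c d e f where pp: "p = (a,b,c,d,e,f)" by (cases p) blast
  have t1: "\<bar>of_int a * u0 * v0\<bar> \<le> \<bar>of_int a\<bar> * (P * R)" using tb assms by blast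
  have t2: "\<bar>of_int b * u0 * v1\<bar> \<le> \<bar>of_int b\<bar> * (P * R)" using tb assms by blast
  have t2': "\<bar>of_int b * u1 * v0\<bar> \<le> \<bar>of_int b\<bar> * (P * R)" using tb assms by blast
  have t3: "\<bar>of_int c * u0 * v2\<bar> \<le> \<bar>of_int c\<bar> * (P * R)" using tb assms by blast
  have t3': "\<bar>of_int c * u2 * v0\<bar> \<le> \<bar>of_int c\<bar> * (P * R)" using tb assms by blast
  have t4: "\<bar>of_int d * u1 * v1\<bar> \<le> \<bar>of_int d\<bar> * (P * R)" using tb assms by blast
  have t5: "\<bar>of_int e * u1 * v2\<bar> \<le> \<bar>of_int e\<bar> * (P * R)" using tb assms by blast
  have t5': "\<bar>of_int e * u2 * v1\<bar> \<le> \<bar>of_int e\<bar> * (P * R)" using tb assms by blast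
  have t6: "\<bar>of_int f * u2 * v2\<bar> \<le> \<bar>of_int f\<bar> * (P * R)" using tb assms by blast
  show ?thesis using t1 t2 t2' t3 t3' t4 t5 t5' t6 unfolding pp
    by (simp add: algebra_simps abs_le_iff)
qed


lemma sq_le_dt: "(of_int (fst z))^2 \<le> real_of_int (dt z z)" "(of_int (fst (snd z)))^2 \<le> real_of_int (dt z z)"
   "(of_int (snd (snd z)))^2 \<le> real_of_int (dt z z)"
  by (cases z; simp add: power2_eq_square)+

lemma abs_le_sqrt: "(x::real)^2 \<le> D \<Longrightarrow> \<bar>x\<bar> \<le> sqrt D"
  by (metis real_sqrt_abs real_sqrt_le_mono)

lemma conic_bound:
  fixes p :: "int \<times> int \<times> int \<times> int \<times> int \<times> int" and x w :: "int \<times> int \<times> int"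
  assumes li: "lin_indep_1 xi eta"
    and pnz: "p \<noteq> (0,0,0,0,0,0)"
    and root: "qf (of6 p) (1,xi,eta) = 0"
    and cz: "cr x w \<noteq> (0,0,0)" and qx: "qf p x = 0"
    and prim: "\<And>g y. g \<ge> 2 \<Longrightarrow> x \<noteq> smul g y"
  shows "\<bar>real_of_int (fst x)\<bar> \<le> 6 * of_int (sabs p) * of_int (dt (cr x w) (cr x w))"
proof -
  define Nc where "Nc = dt (cr x w) (cr x w)"
  obtain u v where sp: "inspan x u v" and nc: "dt (cr u v) (cr u v) = Nc"
    and ord: "dt u u \<le> dt v v" and red: "2 * \<bar>dt u v\<bar> \<le> dt u u"
    using reduce[OF cz] unfolding Nc_def by blast
  have Ncpos: "0 < Nc" unfolding Nc_def using dt_pos[OF cz] .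
  have cuv: "cr u v \<noteq> (0,0,0)" using nc Ncpos by auto
  obtain a b where xab: "x = vadd (smul a u) (smul b v)" using sp inspan_def by auto
  obtain u0 u1 u2 where uu: "u = (u0,u1,u2)" by (cases u) blast
  obtain v0 v1 v2 where vv: "v = (v0,v1,v2)" by (cases v) blast
  have ab0: "\<not> (a = 0 \<and> b = 0)"
  proof
    assume "a = 0 \<and> b = 0"
    then have "x = (0,0,0)" using xab uu vv by simp
    then show False using cz by (cases w) simp
  qed
  have cop: "coprime a b"
  proof (rule ccontr)
    assume nc1: "\<not> coprime a b"
    define g where "g = gcd a b"
    have g1: "g \<noteq> 1" using nc1 by (simp add: g_def coprime_iff_gcd_eq_1)
    have g0: "g \<ge> 0" "g \<noteq> 0" using ab0 by (auto simp: g_def)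
    have g2: "g \<ge> 2" using g0 g1 by linarith
    obtain a' where a': "a = g * a'" using gcd_dvd1[of a b] unfolding g_def by (metis dvdE)
    obtain b' where b': "b = g * b'" using gcd_dvd2[of a b] unfolding g_def by (metis dvdE)
    have "x = smul g (vadd (smul a' u) (smul b' v))" using xab a' b' uu vv
      by (simp add: algebra_simps)
    then show False using prim[OF g2] by blast
  qed
  define A where "A = qf p u"
  define B where "B = bf p u v"
  define C where "C = qf p v"
  have eq: "A * a^2 + B * a * b + C * b^2 = 0" using qx unfolding xab qf_lin2 A_def B_def C_def
    by (simp add: algebra_simps)
  have nzABC: "\<not> (A = 0 \<and> B = 0 \<and> C = 0)" using nondeg[OF li pnz root cuv] A_def B_def C_def by auto
  define du where "du = dt u u"
  define dv where "dv = dt v v"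
  have unz: "u \<noteq> (0,0,0)" using cuv uu vv by auto
  have du1: "1 \<le> du" using dt_pos[OF unz] du_def by simp
  have lag: "3 * du * dv \<le> 4 * Nc"
  proof -
    have L: "Nc = du * dv - (dt u v)^2" using lagrange[of u v] nc du_def dv_def by simp
    have "(2 * \<bar>dt u v\<bar>)^2 \<le> du^2" using red du_def by (intro power_mono) auto
    then have "4 * (dt u v)^2 \<le> du^2" by (simp add: power2_eq_square)
    moreover have "du^2 \<le> du * dv" using ord du1 du_def dv_def by (simp add: power2_eq_square)
    ultimately show ?thesis using L by linarith
  qed
  define P where "P = sqrt (real_of_int du)"
  define R where "R = sqrt (real_of_int dv)"
  have P2: "P * P = du" using du1 P_def by simp
  have R2: "R * R = dv" using du1 ord R_def du_def dv_def by simp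
  have P1: "1 \<le> P" using du1 P_def by simp
  have PR: "P \<le> R" using ord P_def R_def du_def dv_def by simp
  have ub: "\<bar>real_of_int u0\<bar> \<le> P" "\<bar>real_of_int u1\<bar> \<le> P" "\<bar>real_of_int u2\<bar> \<le> P"
    using sq_le_dt[of u] unfolding P_def du_def uu by (auto intro: abs_le_sqrt)
  have vb: "\<bar>real_of_int v0\<bar> \<le> R" "\<bar>real_of_int v1\<bar> \<le> R" "\<bar>real_of_int v2\<bar> \<le> R"
    using sq_le_dt[of v] unfolding R_def dv_def vv by (auto intro: abs_le_sqrt)
  define S where "S = real_of_int (sabs p)"
  have S1: "1 \<le> S"
  proof -
    obtain c1 c2 c3 c4 c5 c6 where pp: "p = (c1,c2,c3,c4,c5,c6)" by (cases p) blast
    have "sabs p \<noteq> 0" using pnz pp by auto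
    moreover have "0 \<le> sabs p" using pp by simp
    ultimately show ?thesis unfolding S_def by linarith
  qed
  have Ab: "\<bar>real_of_int A\<bar> \<le> S * (P * P)"
    using qf_boundr[OF ub, of p] of6_qf[of p "(u0,u1,u2)"] unfolding A_def S_def uu by simp
  have Cb: "\<bar>real_of_int C\<bar> \<le> S * (R * R)"
    using qf_boundr[OF vb, of p] of6_qf[of p "(v0,v1,v2)"] unfolding C_def S_def vv by simp
  have Bb: "\<bar>real_of_int B\<bar> \<le> 2 * S * (P * R)"
    using bf_boundr[OF ub vb, of p] of6_bf[of p "(u0,u1,u2)" "(v0,v1,v2)"] unfolding B_def S_def uu vv by simp
  have x0: "fst x = a * u0 + b * v0" using xab uu vv by simp
  have lagr: "3 * (real_of_int du * real_of_int dv) \<le> 4 * real_of_int Nc"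
    using lag by (metis (mono_tags) mult.assoc of_int_le_iff of_int_mult of_int_numeral)
  have PPRR: "P * P * (R * R) \<le> 4/3 * Nc" using lagr P2 R2 by simp
  have RR: "R \<le> P * P * (R * R)"
  proof -
    have R1: "1 \<le> R" using P1 PR by simp
    have "R * 1 \<le> R * R" using R1 by (intro mult_left_mono) auto
    moreover have "1 * 1 \<le> P * P" using P1 by (intro mult_mono) auto
    then have "1 * (R * R) \<le> P * P * (R * R)" by (intro mult_right_mono) auto
    ultimately show ?thesis by simp
  qed
  have Nc0: "0 \<le> real_of_int Nc" using Ncpos by simp
  show ?thesis
  proof (cases "a = 0")
    case True
    then have "is_unit b" using cop by simp
    then have "\<bar>b\<bar> = 1" by simp
    then have "\<bar>real_of_int b\<bar> = 1" by (metis of_int_abs of_int_1)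
    then have "\<bar>real_of_int (fst x)\<bar> = \<bar>real_of_int v0\<bar>" using x0 True by (simp add: abs_mult)
    also have "\<dots> \<le> R" using vb by simp
    also have "\<dots> \<le> 4/3 * Nc" using RR PPRR by linarith
    also have "\<dots> \<le> 6 * S * Nc" using S1 Nc0 by (intro mult_right_mono) auto
    finally show ?thesis unfolding S_def Nc_def .
  next
    case a0: False
    show ?thesis
    proof (cases "b = 0")
      case True
      then have "is_unit a" using cop by simp
      then have "\<bar>a\<bar> = 1" by simp
      then have "\<bar>real_of_int a\<bar> = 1" by (metis of_int_abs of_int_1)
      then have "\<bar>real_of_int (fst x)\<bar> = \<bar>real_of_int u0\<bar>" using x0 True by (simp add: abs_mult)
      also have "\<dots> \<le> R" using ub PR by simp
      also have "\<dots> \<le> 4/3 * Nc" using RR PPRR by linarith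
      also have "\<dots> \<le> 6 * S * Nc" using S1 Nc0 by (intro mult_right_mono) auto
      finally show ?thesis unfolding S_def Nc_def .
    next
      case b0: False
      have rb: "\<bar>a\<bar> \<le> max \<bar>B\<bar> \<bar>C\<bar> \<and> \<bar>b\<bar> \<le> max \<bar>A\<bar> \<bar>B\<bar>"
        using root_bound[OF eq cop nzABC a0 b0] .
      have S0: "0 \<le> S" using S1 by simp
      have PRR: "P * R \<le> R * R" using PR P1 by (intro mult_right_mono) auto
      have PPR: "P * P \<le> P * R" using PR P1 by (intro mult_left_mono) auto
      have ab: "\<bar>real_of_int a\<bar> \<le> 2 * S * (R * R)"
      proof -
        have "\<bar>real_of_int a\<bar> \<le> max \<bar>real_of_int B\<bar> \<bar>real_of_int C\<bar>" using rb
          by (metis of_int_abs of_int_le_iff of_int_max)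
        moreover have "2 * S * (P * R) \<le> 2 * S * (R * R)" using PRR S0 by (intro mult_left_mono) auto
        moreover have "S * (R * R) \<le> 2 * S * (R * R)"
        proof -
          have "0 \<le> S * (R * R)" using S0 by simp
          then show ?thesis by linarith
        qed
        ultimately show ?thesis using Bb Cb by linarith
      qed
      have bb: "\<bar>real_of_int b\<bar> \<le> 2 * S * (P * R)"
      proof -
        have "\<bar>real_of_int b\<bar> \<le> max \<bar>real_of_int A\<bar> \<bar>real_of_int B\<bar>" using rb
          by (metis of_int_abs of_int_le_iff of_int_max)
        moreover have "S * (P * P) \<le> 2 * S * (P * R)"
        proof -
          have "S * (P * P) \<le> S * (P * R)" using PPR S0 by (rule mult_left_mono)
          moreover have "0 \<le> S * (P * R)" using S0 P1 PR by simp
          ultimately show ?thesis by linarith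
        qed
        ultimately show ?thesis using Bb Ab by linarith
      qed
      have "\<bar>real_of_int (fst x)\<bar> \<le> \<bar>real_of_int a\<bar> * \<bar>real_of_int u0\<bar> + \<bar>real_of_int b\<bar> * \<bar>real_of_int v0\<bar>"
      proof -
        have "real_of_int (fst x) = of_int a * of_int u0 + of_int b * of_int v0" by (simp add: x0)
        then show ?thesis using abs_triangle_ineq[of "real_of_int a * of_int u0" "real_of_int b * of_int v0"]
          by (simp add: abs_mult)
      qed
      also have "\<dots> \<le> (2 * S * (R * R)) * P + (2 * S * (P * R)) * R"
        using ab bb ub vb S0 P1 PR by (intro add_mono mult_mono) (auto simp: mult_nonneg_nonneg)
      also have "\<dots> = 4 * S * (P * (R * R))" by (simp add: algebra_simps)
      also have "\<dots> \<le> 4 * S * (P * P * (R * R))"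
      proof -
        have "P * 1 \<le> P * P" using P1 by (intro mult_left_mono) auto
        then have "P * (R * R) \<le> P * P * (R * R)" by (intro mult_right_mono) auto
        then show ?thesis using S0 by (intro mult_left_mono) auto
      qed
      also have "\<dots> \<le> 4 * S * (4/3 * Nc)" using PPRR S0 by (intro mult_left_mono) auto
      also have "\<dots> \<le> 6 * S * Nc"
      proof -
        have "0 \<le> S * Nc" using S0 Nc0 by simp
        moreover have "4 * S * (4/3 * Nc) = 16/3 * (S * Nc)" "6 * S * Nc = 6 * (S * Nc)" by simp_all
        ultimately show ?thesis by linarith
      qed
      finally show ?thesis unfolding S_def Nc_def .
    qed
  qed
qed


lemma tb3: "\<bar>a\<bar> \<le> A \<Longrightarrow> \<bar>b\<bar> \<le> B \<Longrightarrow> \<bar>c\<bar> \<le> C \<Longrightarrow> \<bar>a * b * c\<bar> \<le> A * B * C" for a b c A B C :: real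
proof -
  assume h: "\<bar>a\<bar> \<le> A" "\<bar>b\<bar> \<le> B" "\<bar>c\<bar> \<le> C"
  have "\<bar>a\<bar> * \<bar>b\<bar> \<le> A * B" using h by (intro mult_mono) auto
  then have "\<bar>a\<bar> * \<bar>b\<bar> * \<bar>c\<bar> \<le> A * B * C" using h by (intro mult_mono) auto
  then show ?thesis by (simp add: abs_mult)
qed

lemma tb2: "\<bar>a\<bar> \<le> A \<Longrightarrow> \<bar>b\<bar> \<le> B \<Longrightarrow> \<bar>a * b\<bar> \<le> A * B" for a b A B :: real
  using tb[of a A b B 1] by simp

lemma comb_bound:
  fixes x0 w0 xi eta e1 e2 f1 f2 m M dx dw :: real
  assumes "\<bar>x0\<bar> \<le> m" "\<bar>w0\<bar> \<le> m" "\<bar>xi\<bar> \<le> M" "\<bar>eta\<bar> \<le> M"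
    "\<bar>e1\<bar> \<le> dx" "\<bar>e2\<bar> \<le> dx" "\<bar>f1\<bar> \<le> dw" "\<bar>f2\<bar> \<le> dw" "dx \<le> dw" "dw \<le> 1" "1 \<le> m"
  shows "\<bar>x0 * eta * f1 - x0 * xi * f2 + w0 * xi * e2 - w0 * eta * e1 + e1 * f2 - e2 * f1\<bar> \<le> (4 * M + 2) * m * dw"
    and "\<bar>x0 * f2 - w0 * e2\<bar> \<le> (4 * M + 2) * m * dw"
    and "\<bar>w0 * e1 - x0 * f1\<bar> \<le> (4 * M + 2) * m * dw"
proof -
  have dx0: "0 \<le> dx" using assms(5) by linarith
  have M0: "0 \<le> M" using assms(3) by linarith
  have t1: "\<bar>x0 * eta * f1\<bar> \<le> m * M * dw" using tb3 assms by blast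
  have t2: "\<bar>x0 * xi * f2\<bar> \<le> m * M * dw" using tb3 assms by blast
  have t3: "\<bar>w0 * xi * e2\<bar> \<le> m * M * dw"
  proof -
    have "\<bar>w0 * xi * e2\<bar> \<le> m * M * dx" using tb3 assms by blast
    moreover have "m * M * dx \<le> m * M * dw" using assms M0 by (intro mult_left_mono) auto
    ultimately show ?thesis by linarith
  qed
  have t4: "\<bar>w0 * eta * e1\<bar> \<le> m * M * dw"
  proof -
    have "\<bar>w0 * eta * e1\<bar> \<le> m * M * dx" using tb3 assms by blast
    moreover have "m * M * dx \<le> m * M * dw" using assms M0 by (intro mult_left_mono) auto
    ultimately show ?thesis by linarith
  qed
  have t5: "\<bar>e1 * f2\<bar> \<le> m * dw"
  proof -
    have "\<bar>e1 * f2\<bar> \<le> 1 * dw" using tb2 assms dx0 by (meson order.trans)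
    moreover have "1 * dw \<le> m * dw" using assms dx0 by (intro mult_right_mono) auto
    ultimately show ?thesis by linarith
  qed
  have t6: "\<bar>e2 * f1\<bar> \<le> m * dw"
  proof -
    have "\<bar>e2 * f1\<bar> \<le> 1 * dw" using tb2 assms dx0 by (meson order.trans)
    moreover have "1 * dw \<le> m * dw" using assms dx0 by (intro mult_right_mono) auto
    ultimately show ?thesis by linarith
  qed
  have s1: "\<bar>x0 * f2\<bar> \<le> m * dw" using tb2 assms by blast
  have s2: "\<bar>w0 * e2\<bar> \<le> m * dw"
  proof -
    have "\<bar>w0 * e2\<bar> \<le> m * dx" using tb2 assms by blast
    moreover have "m * dx \<le> m * dw" using assms by (intro mult_left_mono) auto
    ultimately show ?thesis by linarith
  qed
  have s3: "\<bar>x0 * f1\<bar> \<le> m * dw" using tb2 assms by blast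
  have s4: "\<bar>w0 * e1\<bar> \<le> m * dw"
  proof -
    have "\<bar>w0 * e1\<bar> \<le> m * dx" using tb2 assms by blast
    moreover have "m * dx \<le> m * dw" using assms by (intro mult_left_mono) auto
    ultimately show ?thesis by linarith
  qed
  have md: "0 \<le> m * dw" using assms dx0 by simp
  have mMd: "0 \<le> m * M * dw" using mult_nonneg_nonneg[OF md M0] by (simp add: ac_simps)
  have ex: "(4 * M + 2) * m * dw = 4 * (m * M * dw) + 2 * (m * dw)" by (simp add: algebra_simps)
  show "\<bar>x0 * eta * f1 - x0 * xi * f2 + w0 * xi * e2 - w0 * eta * e1 + e1 * f2 - e2 * f1\<bar> \<le> (4 * M + 2) * m * dw"
    unfolding ex using t1 t2 t3 t4 t5 t6 by (simp add: abs_le_iff) (linarith?)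
  show "\<bar>x0 * f2 - w0 * e2\<bar> \<le> (4 * M + 2) * m * dw"
    unfolding ex using s1 s2 mMd by (simp add: abs_le_iff) (linarith?)
  show "\<bar>w0 * e1 - x0 * f1\<bar> \<le> (4 * M + 2) * m * dw"
    unfolding ex using s3 s4 mMd by (simp add: abs_le_iff) (linarith?)
qed

lemma crxw_bound:
  fixes x0 x1 x2 w0 w1 w2 :: int and m :: real
  assumes x0: "1 \<le> x0" "of_int x0 \<le> m" and w0: "1 \<le> w0" "of_int w0 \<le> m"
    and dd: "delta3 xi eta x0 x1 x2 \<le> delta3 xi eta w0 w1 w2" and d1: "delta3 xi eta w0 w1 w2 \<le> 1"
  shows "real_of_int (dt (cr (x0,x1,x2) (w0,w1,w2)) (cr (x0,x1,x2) (w0,w1,w2)))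
      \<le> 3 * ((4 * (1 + \<bar>xi\<bar> + \<bar>eta\<bar>) + 2) * m * delta3 xi eta w0 w1 w2)^2"
proof -
  define e1 where "e1 = of_int x0 * xi - of_int x1"
  define e2 where "e2 = of_int x0 * eta - of_int x2"
  define f1 where "f1 = of_int w0 * xi - of_int w1"
  define f2 where "f2 = of_int w0 * eta - of_int w2"
  define dx where "dx = delta3 xi eta x0 x1 x2"
  define dw where "dw = delta3 xi eta w0 w1 w2"
  define M where "M = 1 + \<bar>xi\<bar> + \<bar>eta\<bar>"
  define T where "T = (4 * M + 2) * m * dw"
  have b: "\<bar>e1\<bar> \<le> dx" "\<bar>e2\<bar> \<le> dx" "\<bar>f1\<bar> \<le> dw" "\<bar>f2\<bar> \<le> dw"
    unfolding e1_def e2_def f1_def f2_def dx_def dw_def delta3_def by auto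
  have mm: "\<bar>real_of_int x0\<bar> \<le> m" "\<bar>real_of_int w0\<bar> \<le> m" "1 \<le> m" using x0 w0 by auto
  have MM: "\<bar>xi\<bar> \<le> M" "\<bar>eta\<bar> \<le> M" unfolding M_def by auto
  note cb = comb_bound[OF mm(1,2) MM b dd[folded dx_def dw_def] d1[folded dw_def] mm(3)]
  have c0: "real_of_int (x1 * w2 - x2 * w1) = of_int x0 * eta * f1 - of_int x0 * xi * f2 + of_int w0 * xi * e2 - of_int w0 * eta * e1 + e1 * f2 - e2 * f1"
    unfolding e1_def e2_def f1_def f2_def by (simp add: algebra_simps)
  have c1: "real_of_int (x2 * w0 - x0 * w2) = of_int x0 * f2 - of_int w0 * e2"
    unfolding e2_def f2_def by (simp add: algebra_simps)
  have c2: "real_of_int (x0 * w1 - x1 * w0) = of_int w0 * e1 - of_int x0 * f1"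
    unfolding e1_def f1_def by (simp add: algebra_simps)
  have a0: "\<bar>real_of_int (x1 * w2 - x2 * w1)\<bar> \<le> T" using cb(1) c0 unfolding T_def by simp
  have a1: "\<bar>real_of_int (x2 * w0 - x0 * w2)\<bar> \<le> T" using cb(2) c1 unfolding T_def by simp
  have a2: "\<bar>real_of_int (x0 * w1 - x1 * w0)\<bar> \<le> T" using cb(3) c2 unfolding T_def by simp
  have sq: "y^2 \<le> T^2" if "\<bar>y\<bar> \<le> T" for y :: real
  proof -
    have "\<bar>y\<bar>^2 \<le> T^2" using that by (intro power_mono) auto
    then show ?thesis by simp
  qed
  have "real_of_int (dt (cr (x0,x1,x2) (w0,w1,w2)) (cr (x0,x1,x2) (w0,w1,w2)))
      = (real_of_int (x1 * w2 - x2 * w1))^2 + (real_of_int (x2 * w0 - x0 * w2))^2 + (real_of_int (x0 * w1 - x1 * w0))^2"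
    by (simp add: power2_eq_square)
  also have "\<dots> \<le> 3 * T^2" using sq[OF a0] sq[OF a1] sq[OF a2] by linarith
  finally show ?thesis unfolding T_def M_def dw_def .
qed

lemma Fbound:
  fixes x0 x1 x2 :: int
  assumes root: "qf (of6 p) (1,xi,eta) = 0" and x0: "1 \<le> x0" and d1: "delta3 xi eta x0 x1 x2 \<le> 1"
  shows "\<bar>real_of_int (qf p (x0,x1,x2))\<bar> \<le> of_int (sabs p) * (2 * (1 + \<bar>xi\<bar> + \<bar>eta\<bar>) + 1) * (of_int x0 * delta3 xi eta x0 x1 x2)"
proof -
  define e1 where "e1 = of_int x0 * xi - of_int x1"
  define e2 where "e2 = of_int x0 * eta - of_int x2"
  define d where "d = delta3 xi eta x0 x1 x2"
  define M where "M = 1 + \<bar>xi\<bar> + \<bar>eta\<bar>"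
  define S where "S = real_of_int (sabs p)"
  have S0: "0 \<le> S" unfolding S_def by (cases p) simp
  have b: "\<bar>e1\<bar> \<le> d" "\<bar>e2\<bar> \<le> d" unfolding e1_def e2_def d_def delta3_def by auto
  have d0: "0 \<le> d" using b by linarith
  have MM: "\<bar>1\<bar> \<le> M" "\<bar>xi\<bar> \<le> M" "\<bar>eta\<bar> \<le> M" unfolding M_def by auto
  have z: "\<bar>0::real\<bar> \<le> d" using d0 by simp
  have x3: "of3 (x0,x1,x2) = vadd (smul (of_int x0) (1,xi,eta)) (smul (-1) (0,e1,e2))"
    unfolding e1_def e2_def by simp
  have "real_of_int (qf p (x0,x1,x2)) = qf (of6 p) (of3 (x0,x1,x2))" by (rule of6_qf)
  also have "\<dots> = - (of_int x0 * bf (of6 p) (1,xi,eta) (0,e1,e2)) + qf (of6 p) (0,e1,e2)"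
    unfolding x3 qf_lin2 root by simp
  finally have eq: "real_of_int (qf p (x0,x1,x2)) = - (of_int x0 * bf (of6 p) (1,xi,eta) (0,e1,e2)) + qf (of6 p) (0,e1,e2)" .
  have B: "\<bar>bf (of6 p) (1,xi,eta) (0,e1,e2)\<bar> \<le> 2 * S * (M * d)"
    using bf_boundr[OF MM z b, of p] unfolding S_def .
  have Q: "\<bar>qf (of6 p) (0,e1,e2)\<bar> \<le> S * (d * d)"
    using qf_boundr[OF z b, of p] unfolding S_def .
  have "\<bar>of_int x0 * bf (of6 p) (1,xi,eta) (0,e1,e2)\<bar> \<le> of_int x0 * (2 * S * (M * d))"
    using B x0 by (simp add: abs_mult mult_left_mono)
  moreover have "S * (d * d) \<le> S * (of_int x0 * d)"
  proof -
    have "d * d \<le> 1 * d" using d1 d0 unfolding d_def by (intro mult_right_mono) auto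
    also have "\<dots> \<le> of_int x0 * d" using x0 d0 by (intro mult_right_mono) auto
    finally show ?thesis using S0 by (intro mult_left_mono) auto
  qed
  ultimately have "\<bar>real_of_int (qf p (x0,x1,x2))\<bar> \<le> of_int x0 * (2 * S * (M * d)) + S * (of_int x0 * d)"
    using eq Q by (simp add: abs_le_iff)
  also have "\<dots> = S * (2 * M + 1) * (of_int x0 * d)" by (simp add: algebra_simps)
  finally show ?thesis unfolding S_def M_def d_def .
qed


lemma delta3_nonneg: "0 \<le> delta3 xi eta a b c" unfolding delta3_def by simp

lemma Delta_min:
  assumes X1: "1 \<le> X"
  shows "\<exists>x0 x1 x2. 1 \<le> x0 \<and> of_int x0 \<le> X \<and> Delta xi eta X = delta3 xi eta x0 x1 x2 \<and>
     (\<forall>y0 y1 y2. 1 \<le> y0 \<and> of_int y0 \<le> X \<longrightarrow> delta3 xi eta x0 x1 x2 \<le> delta3 xi eta y0 y1 y2)"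
proof -
  define n where "n = \<lfloor>X\<rfloor>"
  have n1: "1 \<le> n" using X1 unfolding n_def by (simp add: le_floor_iff)
  define s where "s = of_int n * (\<bar>xi\<bar> + \<bar>eta\<bar>)"
  define R where "R = \<lceil>s\<rceil> + 1"
  define Bx where "Bx = {1..n} \<times> {-R..R} \<times> {-R..R}"
  define T where "T = (\<lambda>(a,b,c). delta3 xi eta a b c) ` Bx"
  have fin: "finite T" unfolding T_def Bx_def by simp
  have Rge: "of_int n * \<bar>xi\<bar> + 1 \<le> of_int R" "of_int n * \<bar>eta\<bar> + 1 \<le> of_int R"
  proof -
    have "s \<le> of_int \<lceil>s\<rceil>" by simp
    moreover have "s = of_int n * \<bar>xi\<bar> + of_int n * \<bar>eta\<bar>" unfolding s_def by (simp add: distrib_left)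
    moreover have "0 \<le> of_int n * \<bar>xi\<bar>" "0 \<le> of_int n * \<bar>eta\<bar>" using n1 by simp_all
    moreover have "real_of_int R = of_int \<lceil>s\<rceil> + 1" unfolding R_def by simp
    ultimately show "of_int n * \<bar>xi\<bar> + 1 \<le> of_int R" "of_int n * \<bar>eta\<bar> + 1 \<le> of_int R"
      by linarith+
  qed
  define e where "e = (1::int, round xi, round eta)"
  have eB: "e \<in> Bx"
  proof -
    have "\<bar>of_int (round xi) - xi\<bar> \<le> 1/2" "\<bar>of_int (round eta) - eta\<bar> \<le> 1/2"
      by (rule of_int_round_abs_le)+
    moreover have "\<bar>xi\<bar> \<le> of_int n * \<bar>xi\<bar>" "\<bar>eta\<bar> \<le> of_int n * \<bar>eta\<bar>" using n1
      by (simp_all add: mult_le_cancel_right1)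
    ultimately have "\<bar>of_int (round xi)\<bar> \<le> real_of_int R" "\<bar>of_int (round eta)\<bar> \<le> real_of_int R"
      using Rge by linarith+
    then have "\<bar>round xi\<bar> \<le> R" "\<bar>round eta\<bar> \<le> R" by linarith+
    then show ?thesis unfolding e_def Bx_def using n1 by auto
  qed
  have de: "delta3 xi eta 1 (round xi) (round eta) \<le> 1/2"
    unfolding delta3_def using of_int_round_abs_le[of xi] of_int_round_abs_le[of eta] by (simp add: abs_minus_commute)
  have Tne: "T \<noteq> {}" using eB unfolding T_def by auto
  obtain t where tT: "t \<in> Bx" and tmin: "(\<lambda>(a,b,c). delta3 xi eta a b c) t = Min T"
    using Min_in[OF fin Tne] unfolding T_def by auto
  obtain x0 x1 x2 where tt: "t = (x0,x1,x2)" by (cases t) blast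
  have mle: "delta3 xi eta x0 x1 x2 \<le> delta3 xi eta y0 y1 y2" if y: "1 \<le> y0" "of_int y0 \<le> X" for y0 y1 y2
  proof (cases "(y0,y1,y2) \<in> Bx")
    case True
    then have "delta3 xi eta y0 y1 y2 \<in> T" unfolding T_def by force
    then show ?thesis using Min_le[OF fin] tmin tt by auto
  next
    case False
    have y0n: "y0 \<le> n" using y unfolding n_def by (simp add: le_floor_iff)
    have "\<bar>y1\<bar> > R \<or> \<bar>y2\<bar> > R" using False y y0n unfolding Bx_def by auto
    then have big: "1 < delta3 xi eta y0 y1 y2"
    proof
      assume h: "\<bar>y1\<bar> > R"
      have "of_int y0 * \<bar>xi\<bar> \<le> of_int n * \<bar>xi\<bar>" using y0n by (simp add: mult_right_mono)
      moreover have "\<bar>of_int y0 * xi\<bar> = of_int y0 * \<bar>xi\<bar>" using y by (simp add: abs_mult)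
      moreover have "real_of_int R + 1 \<le> \<bar>of_int y1\<bar>" using h by linarith
      ultimately have "1 < \<bar>of_int y0 * xi - of_int y1\<bar>" using Rge by linarith
      then show ?thesis unfolding delta3_def by simp
    next
      assume h: "\<bar>y2\<bar> > R"
      have "of_int y0 * \<bar>eta\<bar> \<le> of_int n * \<bar>eta\<bar>" using y0n by (simp add: mult_right_mono)
      moreover have "\<bar>of_int y0 * eta\<bar> = of_int y0 * \<bar>eta\<bar>" using y by (simp add: abs_mult)
      moreover have "real_of_int R + 1 \<le> \<bar>of_int y2\<bar>" using h by linarith
      ultimately have "1 < \<bar>of_int y0 * eta - of_int y2\<bar>" using Rge by linarith
      then show ?thesis unfolding delta3_def by simp
    qed
    have "delta3 xi eta 1 (round xi) (round eta) \<in> T" using eB unfolding T_def e_def by force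
    then have "Min T \<le> 1/2" using Min_le[OF fin] de by force
    then show ?thesis using big tmin tt by auto
  qed
  have x0r: "1 \<le> x0" "of_int x0 \<le> X" using tT tt unfolding Bx_def n_def by (auto simp: le_floor_iff)
  have "Delta xi eta X = delta3 xi eta x0 x1 x2"
    unfolding Delta_def
    by (rule cInf_eq_minimum) (use x0r mle in auto)
  then show ?thesis using x0r mle by blast
qed

lemma Delta_le:
  assumes "1 \<le> y0" "of_int y0 \<le> X"
  shows "Delta xi eta X \<le> delta3 xi eta y0 y1 y2"
proof -
  have "1 \<le> X" using assms by linarith
  then show ?thesis using Delta_min[of X xi eta] assms by force
qed

lemma Delta_floor: "Delta xi eta X = Delta xi eta (of_int \<lfloor>X\<rfloor>)"
proof -
  have "(of_int x0 \<le> X) = (of_int x0 \<le> (of_int \<lfloor>X\<rfloor>::real))" for x0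
    by (metis floor_of_int le_floor_iff)
  then show ?thesis unfolding Delta_def by simp
qed

lemma delta3_pos:
  assumes li: "lin_indep_1 xi eta" and x0: "x0 \<noteq> 0"
  shows "0 < delta3 xi eta x0 x1 x2"
proof (rule ccontr)
  assume "\<not> 0 < delta3 xi eta x0 x1 x2"
  then have "of_int x0 * xi - of_int x1 = 0" unfolding delta3_def by auto
  moreover have "of_rat (of_int (-x1)) + of_rat (of_int x0) * xi + of_rat 0 * eta = (of_int x0 * xi - of_int x1 :: real)"
    by (simp only: of_rat_of_int_eq of_rat_0)
  ultimately have "of_rat (of_int (-x1)) + of_rat (of_int x0) * xi + of_rat 0 * eta = 0" by simp
  then show False using li x0 unfolding lin_indep_1_def by fastforce
qed

lemma Delta_pos:
  assumes li: "lin_indep_1 xi eta" and "1 \<le> X"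
  shows "0 < Delta xi eta X"
  using Delta_min[OF assms(2), of xi eta] delta3_pos[OF li] by fastforce

lemma Delta_anti:
  assumes "1 \<le> X" "X \<le> Y"
  shows "Delta xi eta Y \<le> Delta xi eta X"
proof -
  obtain x0 x1 x2 where "1 \<le> x0" "of_int x0 \<le> X" "Delta xi eta X = delta3 xi eta x0 x1 x2"
    using Delta_min[OF assms(1), of xi eta] by blast
  then show ?thesis using Delta_le[of x0 Y xi eta x1 x2] assms by simp
qed

lemma isCont_locconst:
  assumes "0 < r" "\<And>x. \<bar>x - a\<bar> < r \<Longrightarrow> f x = f a"
  shows "isCont (f :: real \<Rightarrow> real) a"
  unfolding isCont_def
proof (rule LIM_I)
  fix e :: real assume "0 < e"
  show "\<exists>s>0. \<forall>x. x \<noteq> a \<and> norm (x - a) < s \<longrightarrow> norm (f x - f a) < e"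
  proof (intro exI[of _ r] conjI allI impI)
    show "0 < r" using assms(1) .
    fix x assume h: "x \<noteq> a \<and> norm (x - a) < r"
    then have "\<bar>x - a\<bar> < r" by simp
    then have "f x = f a" by (rule assms(2))
    then show "norm (f x - f a) < e" using \<open>0 < e\<close> by simp
  qed
qed


lemma Delta_step:
  assumes "1 \<le> n" "of_int n \<le> X" "X < of_int n + 1"
  shows "Delta xi eta X = Delta xi eta (of_int n)"
proof -
  have "\<lfloor>X\<rfloor> = n" using assms by linarith
  then show ?thesis using Delta_floor[of xi eta X] by simp
qed

lemma Xset_int:
  assumes li: "lin_indep_1 xi eta" and a: "a \<in> Xset xi eta"
  shows "\<exists>n::int. a = of_int n \<and> 1 \<le> n \<and>
     (n = 1 \<or> Delta xi eta (of_int n) < Delta xi eta (of_int (n - 1)))"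
proof (cases "a = 1")
  case True then show ?thesis by (intro exI[of _ 1]) simp
next
  case False
  then have a1: "1 < a" and nc: "\<not> isCont (Delta xi eta) a" using a unfolding Xset_def by auto
  define n where "n = \<lfloor>a\<rfloor>"
  have n1: "1 \<le> n" using a1 unfolding n_def by (simp add: le_floor_iff)
  show ?thesis
  proof (cases "a = of_int n")
    case False
    have lt: "of_int n < a" "a < of_int n + 1" using False unfolding n_def
      using of_int_floor_le[of a] real_of_int_floor_add_one_gt[of a] by (auto simp: order.strict_iff_order)
    define r where "r = min (a - of_int n) (of_int n + 1 - a)"
    have "isCont (Delta xi eta) a"
    proof (rule isCont_locconst)
      show "0 < r" using lt unfolding r_def by simp
      fix x assume "\<bar>x - a\<bar> < r"
      then have "of_int n \<le> x" "x < of_int n + 1" unfolding r_def by auto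
      then show "Delta xi eta x = Delta xi eta a"
        using Delta_step[OF n1] lt by (metis less_imp_le)
    qed
    then show ?thesis using nc by simp
  next
    case True
    have n2: "2 \<le> n" using True a1 n1 by (cases "n = 1") auto
    have le: "Delta xi eta (of_int n) \<le> Delta xi eta (of_int (n - 1))"
      using Delta_anti[of "of_int (n-1)" "of_int n" xi eta] n2 by simp
    have "Delta xi eta (of_int n) \<noteq> Delta xi eta (of_int (n - 1))"
    proof
      assume eq: "Delta xi eta (of_int n) = Delta xi eta (of_int (n - 1))"
      have "isCont (Delta xi eta) a"
      proof (rule isCont_locconst[where r = 1])
        fix x assume h: "\<bar>x - a\<bar> < 1"
        show "Delta xi eta x = Delta xi eta a"
        proof (cases "x < a")
          case True
          have "Delta xi eta x = Delta xi eta (of_int (n-1))"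
            using Delta_step[of "n-1" x xi eta] h True \<open>a = of_int n\<close> n2 by simp
          then show ?thesis using eq \<open>a = of_int n\<close> by simp
        next
          case False
          then show ?thesis using Delta_step[of n x xi eta] h \<open>a = of_int n\<close> n1 by simp
        qed
      qed simp
      then show False using nc by simp
    qed
    then show ?thesis using le True n1 by (intro exI[of _ n]) simp
  qed
qed

lemma int_in_Xset:
  assumes n2: "2 \<le> n" and lt: "Delta xi eta (of_int n) < Delta xi eta (of_int (n - 1))"
  shows "of_int n \<in> Xset xi eta"
proof -
  have "\<not> isCont (Delta xi eta) (of_int n)"
  proof
    assume "isCont (Delta xi eta) (of_int n)"
    then have "Delta xi eta \<midarrow>of_int n\<rightarrow> Delta xi eta (of_int n)" by (simp add: isCont_def)
    then obtain s where s: "0 < s" and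
      hs: "\<And>x. x \<noteq> of_int n \<and> norm (x - of_int n) < s \<Longrightarrow>
              norm (Delta xi eta x - Delta xi eta (of_int n)) < Delta xi eta (of_int (n - 1)) - Delta xi eta (of_int n)"
      using LIM_D[of "Delta xi eta" "Delta xi eta (of_int n)" "of_int n"
                     "Delta xi eta (of_int (n - 1)) - Delta xi eta (of_int n)"] lt by auto
    define x where "x = of_int n - min (s/2) (1/2)"
    have x1: "of_int (n - 1) \<le> x" "x < of_int (n-1) + 1" using s unfolding x_def by auto
    have "Delta xi eta x = Delta xi eta (of_int (n - 1))"
      using Delta_step[OF _ x1, of xi eta] n2 by simp
    moreover have "x \<noteq> of_int n \<and> norm (x - of_int n) < s" using s unfolding x_def by auto
    ultimately show False using hs[of x] by simp
  qed
  moreover have "1 < real_of_int n" using n2 by simp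
  ultimately show ?thesis unfolding Xset_def by simp
qed

lemma consec:
  assumes li: "lin_indep_1 xi eta"
    and a: "a \<in> Xset xi eta" and b: "b \<in> Xset xi eta" and ab: "a < b"
    and none: "\<forall>z \<in> Xset xi eta. \<not> (a < z \<and> z < b)"
  shows "\<exists>m n::int. a = of_int m \<and> b = of_int n \<and> 1 \<le> m \<and> m < n \<and>
     (m = 1 \<or> Delta xi eta (of_int m) < Delta xi eta (of_int (m - 1))) \<and>
     (\<forall>X. of_int m \<le> X \<and> X < of_int n \<longrightarrow> Delta xi eta X = Delta xi eta (of_int m))"
proof -
  obtain m where m: "a = of_int m" "1 \<le> m" "m = 1 \<or> Delta xi eta (of_int m) < Delta xi eta (of_int (m - 1))"
    using Xset_int[OF li a] by blast
  obtain n where n: "b = of_int n" "1 \<le> n" using Xset_int[OF li b] by blast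
  have mn: "m < n" using ab m n by simp
  have st: "Delta xi eta (of_int k) = Delta xi eta (of_int (k - 1))" if "m < k" "k < n" for k
  proof (rule ccontr)
    assume ne: "Delta xi eta (of_int k) \<noteq> Delta xi eta (of_int (k - 1))"
    have k2: "2 \<le> k" using that m by simp
    have "Delta xi eta (of_int k) \<le> Delta xi eta (of_int (k - 1))"
      using Delta_anti[of "of_int (k-1)" "of_int k" xi eta] k2 by simp
    then have "of_int k \<in> Xset xi eta" using int_in_Xset[OF k2] ne by simp
    then show False using none that m n by auto
  qed
  have all: "j < n \<longrightarrow> Delta xi eta (of_int j) = Delta xi eta (of_int m)" if "m \<le> j" for j
    using that
  proof (induction j rule: int_ge_induct)
    case base then show ?case by simp
  next
    case (step i) then show ?case using st[of "i+1"] by auto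
  qed
  have "Delta xi eta X = Delta xi eta (of_int m)" if "of_int m \<le> X" "X < of_int n" for X
  proof -
    have "m \<le> \<lfloor>X\<rfloor>" "\<lfloor>X\<rfloor> < n" using that by (simp_all add: le_floor_iff floor_less_iff)
    then show ?thesis using all[of "\<lfloor>X\<rfloor>"] Delta_floor[of xi eta X] by simp
  qed
  then show ?thesis using m n mn by blast
qed


lemma poly_le_sum: "degree p \<le> n \<Longrightarrow> poly p x = (\<Sum>i\<le>n. coeff p i * x ^ i)" for p :: "'a::comm_semiring_1 poly"
proof -
  assume "degree p \<le> n"
  then have "poly p x = poly (\<Sum>i\<le>n. monom (coeff p i) i) x" by (simp add: poly_as_sum_of_monoms')
  also have "\<dots> = (\<Sum>i\<le>n. coeff p i * x ^ i)" by (simp add: poly_sum poly_monom)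
  finally show ?thesis .
qed

lemma rat_den: "\<exists>d::int. d > 0 \<and> (\<exists>a::int. of_int d * r = of_int a)" for r :: rat
proof -
  obtain a d where q: "quotient_of r = (a, d)" by (cases "quotient_of r") blast
  have "d > 0" using quotient_of_denom_pos[OF q] .
  moreover have "r = of_int a / of_int d" using quotient_of_div[OF q] .
  ultimately show ?thesis by (intro exI[of _ d]) (auto intro!: exI[of _ a])
qed

lemma rat_dens: "\<exists>d::int. d > 0 \<and> (\<forall>r \<in> set rs. \<exists>a::int. of_int d * (r::rat) = of_int a)"
proof (induction rs)
  case Nil then show ?case by (intro exI[of _ 1]) simp
next
  case (Cons r rs)
  obtain d where d: "d > 0" "\<forall>r \<in> set rs. \<exists>a::int. of_int d * r = of_int a" using Cons.IH by blast
  obtain d1 a1 where d1: "d1 > 0" "of_int d1 * r = of_int a1" using rat_den[of r] by blast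
  have "\<forall>r' \<in> set (r # rs). \<exists>a::int. of_int (d1 * d) * r' = of_int a"
  proof
    fix r' assume "r' \<in> set (r # rs)"
    then consider "r' = r" | "r' \<in> set rs" by auto
    then show "\<exists>a::int. of_int (d1 * d) * r' = of_int a"
    proof cases
      case 1
      then have "of_int (d1 * d) * r' = of_int (a1 * d)" using d1 by (simp add: algebra_simps)
      then show ?thesis by blast
    next
      case 2
      then obtain a where "of_int d * r' = of_int a" using d by blast
      then have "of_int (d1 * d) * r' = of_int (d1 * a)" by (simp add: algebra_simps)
      then show ?thesis by blast
    qed
  qed
  then show ?case using d d1 by (intro exI[of _ "d1 * d"]) simp
qed

lemma extract_qf:
  fixes f :: "rat poly poly"
  assumes deg: "total_degree f = 2" and fnz: "f \<noteq> 0"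
  shows "\<exists>p. p \<noteq> (0,0,0,0,0,0) \<and> (\<exists>D>0. \<forall>xi eta. qf (of6 p) (1, xi, eta) = D * eval2 f xi eta)"
proof -
  define r where "r i k = coeff (coeff f i) k" for i k
  have fin: "finite {i + degree (coeff f i) | i. coeff f i \<noteq> 0}"
  proof -
    have "{i + degree (coeff f i) | i. coeff f i \<noteq> 0} \<subseteq> (\<lambda>i. i + degree (coeff f i)) ` {..degree f}"
      using le_degree by fastforce
    then show ?thesis by (rule finite_subset) simp
  qed
  have dle: "i + degree (coeff f i) \<le> 2" if "coeff f i \<noteq> 0" for i
  proof -
    have "i + degree (coeff f i) \<le> Max ({0} \<union> {i + degree (coeff f i) | i. coeff f i \<noteq> 0})"
      using that fin by (intro Max_ge) auto
    then show ?thesis using deg unfolding total_degree_def by simp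
  qed
  have rz: "r i k = 0" if "2 < i + k" for i k
  proof (cases "coeff f i = 0")
    case True then show ?thesis unfolding r_def by simp
  next
    case False
    then have "degree (coeff f i) < k" using dle[OF False] that by simp
    then show ?thesis unfolding r_def by (simp add: coeff_eq_0)
  qed
  have cf0: "coeff f i = 0" if "2 < i" for i
  proof -
    have "coeff (coeff f i) k = 0" for k using rz[of i k] that unfolding r_def by simp
    then show ?thesis by (simp add: poly_eq_iff)
  qed
  have degf: "degree f \<le> 2" using cf0 by (intro degree_le) auto
  have degc: "degree (coeff f i) \<le> 2" for i
  proof (cases "coeff f i = 0")
    case True then show ?thesis by simp
  next
    case False then show ?thesis using dle[OF False] by simp
  qed
  have ev: "eval2 f xi eta = (\<Sum>i\<le>2. (\<Sum>k\<le>2. of_rat (r i k) * xi ^ k) * eta ^ i)" for xi eta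
  proof -
    let ?g = "\<lambda>c. poly (map_poly of_rat c) xi"
    have "eval2 f xi eta = poly (map_poly ?g f) eta" unfolding eval2_def by simp
    also have "\<dots> = (\<Sum>i\<le>2. coeff (map_poly ?g f) i * eta ^ i)"
      using degf map_poly_degree_leq[of ?g f] by (intro poly_le_sum) linarith
    also have "\<dots> = (\<Sum>i\<le>2. ?g (coeff f i) * eta ^ i)" by (simp add: coeff_map_poly)
    also have "\<dots> = (\<Sum>i\<le>2. (\<Sum>k\<le>2. of_rat (r i k) * xi ^ k) * eta ^ i)"
    proof (rule sum.cong[OF refl])
      fix i
      have "?g (coeff f i) = (\<Sum>k\<le>2. coeff (map_poly of_rat (coeff f i)) k * xi ^ k)"
        using degc[of i] map_poly_degree_leq[of "of_rat :: rat \<Rightarrow> real" "coeff f i"] by (intro poly_le_sum) linarith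
      also have "\<dots> = (\<Sum>k\<le>2. of_rat (r i k) * xi ^ k)" by (simp add: coeff_map_poly r_def)
      finally show "?g (coeff f i) * eta ^ i = (\<Sum>k\<le>2. of_rat (r i k) * xi ^ k) * eta ^ i" by simp
    qed
    finally show ?thesis .
  qed
  have ev2: "eval2 f xi eta = of_rat (r 0 0) + of_rat (r 0 1) * xi + of_rat (r 1 0) * eta
      + of_rat (r 0 2) * xi * xi + of_rat (r 1 1) * xi * eta + of_rat (r 2 0) * eta * eta" for xi eta
    unfolding ev using rz[of 1 2] rz[of 2 1] rz[of 2 2]
    by (simp add: numeral_2_eq_2 algebra_simps)
  obtain D where D: "D > 0" and Dr: "\<forall>q \<in> set [r 0 0, r 0 1, r 1 0, r 0 2, r 1 1, r 2 0]. \<exists>a::int. of_int D * q = of_int a"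
    using rat_dens by blast
  obtain a00 where a00: "of_int D * r 0 0 = of_int a00" using Dr by auto
  obtain a01 where a01: "of_int D * r 0 1 = of_int a01" using Dr by auto
  obtain a10 where a10: "of_int D * r 1 0 = of_int a10" using Dr by auto
  obtain a02 where a02: "of_int D * r 0 2 = of_int a02" using Dr by auto
  obtain a11 where a11: "of_int D * r 1 1 = of_int a11" using Dr by auto
  obtain a20 where a20: "of_int D * r 2 0 = of_int a20" using Dr by auto
  define p where "p = (a00, a01, a10, a02, a11, a20)"
  have conv: "(of_int a :: real) = of_int D * of_rat q" if "of_int D * q = of_int a" for a q
  proof -
    have "(of_rat (of_int D * q) :: real) = of_rat (of_int a)" using that by simp
    then show ?thesis by (simp add: of_rat_mult of_rat_of_int_eq)
  qed
  have eqq: "qf (of6 p) (1, xi, eta) = of_int D * eval2 f xi eta" for xi eta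
    unfolding ev2 p_def using conv[OF a00] conv[OF a01] conv[OF a10] conv[OF a02] conv[OF a11] conv[OF a20]
    by (simp add: algebra_simps)
  have pnz: "p \<noteq> (0,0,0,0,0,0)"
  proof
    assume p0: "p = (0,0,0,0,0,0)"
    have rr: "r 0 0 = 0" "r 0 1 = 0" "r 1 0 = 0" "r 0 2 = 0" "r 1 1 = 0" "r 2 0 = 0"
      using p0 a00 a01 a10 a02 a11 a20 D unfolding p_def by auto
    have "r i k = 0" for i k
    proof (cases "2 < i + k")
      case True then show ?thesis by (rule rz)
    next
      case False
      then have "(i,k) \<in> {(0,0),(0,1),(1,0),(0,2),(1,1),(2,0)}" by auto
      then show ?thesis using rr by auto
    qed
    then have "coeff f i = 0" for i unfolding r_def by (simp add: poly_eq_iff)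
    then have "f = 0" by (simp add: poly_eq_iff)
    then show False using fnz by simp
  qed
  show ?thesis using pnz eqq D by (intro exI[of _ p]) (auto intro!: exI[of _ "of_int D"])
qed


lemma delta3_smul: "0 \<le> g \<Longrightarrow> delta3 xi eta (g * y0) (g * y1) (g * y2) = of_int g * delta3 xi eta y0 y1 y2"
proof -
  assume g: "0 \<le> g"
  have e1: "of_int (g * y0) * xi - of_int (g * y1) = of_int g * (of_int y0 * xi - of_int y1 :: real)"
    by (simp add: algebra_simps)
  have e2: "of_int (g * y0) * eta - of_int (g * y2) = of_int g * (of_int y0 * eta - of_int y2 :: real)"
    by (simp add: algebra_simps)
  have ag: "\<bar>real_of_int g\<bar> = of_int g" using g by simp
  have "\<bar>of_int (g * y0) * xi - of_int (g * y1)\<bar> = of_int g * \<bar>of_int y0 * xi - of_int y1\<bar>"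
    unfolding e1 abs_mult ag ..
  moreover have "\<bar>of_int (g * y0) * eta - of_int (g * y2)\<bar> = of_int g * \<bar>of_int y0 * eta - of_int y2\<bar>"
    unfolding e2 abs_mult ag ..
  ultimately show ?thesis unfolding delta3_def using g by (simp add: max_mult_distrib_left)
qed

lemma delta3_neg: "delta3 xi eta (- a) (- b) (- c) = delta3 xi eta a b c"
  unfolding delta3_def by (simp add: abs_minus_commute algebra_simps)

lemma Delta_half: "1 \<le> X \<Longrightarrow> Delta xi eta X \<le> 1/2"
proof -
  assume "1 \<le> X"
  then have "Delta xi eta X \<le> delta3 xi eta 1 (round xi) (round eta)" by (intro Delta_le) simp_all
  also have "\<dots> \<le> 1/2"
    unfolding delta3_def using of_int_round_abs_le[of xi] of_int_round_abs_le[of eta] by (simp add: abs_minus_commute)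
  finally show ?thesis .
qed

lemma UB_lemma:
  assumes lam: "0 < lam"
    and X0: "\<forall>X. X \<ge> 1 \<and> X \<ge> X0 \<longrightarrow>
        (\<exists>x0 x1 x2 :: int. (x0, x1, x2) \<noteq> (0, 0, 0) \<and> \<bar>of_int x0\<bar> \<le> X \<and>
            \<bar>of_int x0 * xi - of_int x1\<bar> \<le> X powr (- lam) \<and>
            \<bar>of_int x0 * eta - of_int x2\<bar> \<le> X powr (- lam))"
    and X: "1 < X" "X0 \<le> X"
  shows "Delta xi eta X \<le> X powr (- lam)"
proof -
  obtain z0 z1 z2 :: int where z: "(z0,z1,z2) \<noteq> (0,0,0)" "\<bar>of_int z0\<bar> \<le> X"
    "\<bar>of_int z0 * xi - of_int z1\<bar> \<le> X powr (- lam)" "\<bar>of_int z0 * eta - of_int z2\<bar> \<le> X powr (- lam)"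
  proof -
    have "1 \<le> X \<and> X0 \<le> X" using X by simp
    then show ?thesis using that X0 by blast
  qed
  have lt1: "X powr (- lam) < 1" using X lam by (intro powr_less_one) auto
  have z0: "z0 \<noteq> 0"
  proof
    assume "z0 = 0"
    then have "\<bar>of_int z1\<bar> < (1::real)" "\<bar>of_int z2\<bar> < (1::real)" using z lt1 by auto
    then have "z1 = 0" "z2 = 0" by linarith+
    then show False using z \<open>z0 = 0\<close> by simp
  qed
  have dz: "delta3 xi eta z0 z1 z2 \<le> X powr (- lam)" unfolding delta3_def using z by simp
  show ?thesis
  proof (cases "0 < z0")
    case True
    then have "Delta xi eta X \<le> delta3 xi eta z0 z1 z2" using z by (intro Delta_le) simp_all
    then show ?thesis using dz by simp
  next
    case False
    then have "1 \<le> - z0" using z0 by simp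
    moreover have "of_int (- z0) \<le> X" using z False by simp
    ultimately have "Delta xi eta X \<le> delta3 xi eta (- z0) (- z1) (- z2)" by (intro Delta_le) simp_all
    then show ?thesis using dz delta3_neg by simp
  qed
qed

lemma onconic:
  fixes p :: "int \<times> int \<times> int \<times> int \<times> int \<times> int" and m x1 x2 :: int
  assumes li: "lin_indep_1 xi eta" and pnz: "p \<noteq> (0,0,0,0,0,0)"
    and root: "qf (of6 p) (1,xi,eta) = 0"
    and lam: "1/2 < lam"
    and UB: "\<And>X. 1 < X \<Longrightarrow> X0 \<le> X \<Longrightarrow> Delta xi eta X \<le> X powr (- lam)"
    and m2: "2 \<le> m" and mX0: "X0 \<le> of_int m - 1/2"
    and dx: "delta3 xi eta m x1 x2 = Delta xi eta (of_int m)"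
    and strict: "\<And>z0 z1 z2. 1 \<le> z0 \<Longrightarrow> z0 \<le> m - 1 \<Longrightarrow> Delta xi eta (of_int m) < delta3 xi eta z0 z1 z2"
    and q0: "qf p (m,x1,x2) = 0"
  shows "of_int m powr (2 * lam - 1) \<le> 18 * of_int (sabs p) * (4 * (1 + \<bar>xi\<bar> + \<bar>eta\<bar>) + 2)^2 * 2 powr (2 * lam)"
proof -
  obtain w0 w1 w2 where w: "1 \<le> w0" "of_int w0 \<le> (of_int (m-1) :: real)"
      "Delta xi eta (of_int (m-1)) = delta3 xi eta w0 w1 w2"
    using Delta_min[of "of_int (m-1)" xi eta] m2 by auto
  define dw where "dw = delta3 xi eta w0 w1 w2"
  define dxx where "dxx = delta3 xi eta m x1 x2"
  define S where "S = real_of_int (sabs p)"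
  define Mc where "Mc = 4 * (1 + \<bar>xi\<bar> + \<bar>eta\<bar>) + 2"
  define mr where "mr = real_of_int m"
  have mr2: "2 \<le> mr" using m2 unfolding mr_def by simp
  have w0m: "w0 \<le> m - 1" using w(2) by simp
  have dwh: "dw = Delta xi eta (mr - 1/2)"
  proof -
    have "Delta xi eta (mr - 1/2) = Delta xi eta (of_int (m - 1))"
      using m2 unfolding mr_def by (intro Delta_step) auto
    then show ?thesis using w(3) unfolding dw_def by simp
  qed
  have dwub: "dw \<le> (mr - 1/2) powr (- lam)" unfolding dwh using mr2 mX0 unfolding mr_def
    by (intro UB) auto
  have lt: "dxx < dw" using strict[OF w(1) w0m, of w1 w2] dx unfolding dxx_def dw_def by simp
  have dw1: "dw \<le> 1" using Delta_half[of "of_int (m-1)" xi eta] m2 w(3) unfolding dw_def by simp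
  have dxx0: "0 \<le> dxx" unfolding dxx_def by (rule delta3_nonneg)
  have cz: "cr (m,x1,x2) (w0,w1,w2) \<noteq> (0,0,0)"
  proof
    assume "cr (m,x1,x2) (w0,w1,w2) = (0,0,0)"
    then have h1: "m * w1 = x1 * w0" "x2 * w0 = m * w2" by simp_all
    have h1r: "real_of_int m * of_int w1 = of_int x1 * of_int w0" "real_of_int x2 * of_int w0 = of_int m * of_int w2"
      using h1 by (metis of_int_mult)+
    have r1: "of_int m * (of_int w0 * xi - of_int w1) = of_int w0 * (of_int m * xi - real_of_int x1)"
      using h1r by (simp add: algebra_simps)
    have r2: "of_int m * (of_int w0 * eta - of_int w2) = of_int w0 * (of_int m * eta - real_of_int x2)"
      using h1r by (simp add: algebra_simps)
    have m0: "0 \<le> real_of_int m" "0 \<le> real_of_int w0" using m2 w(1) by simp_all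
    have "of_int m * dw = of_int w0 * dxx"
    proof -
      have "of_int m * dw = max (of_int m * \<bar>of_int w0 * xi - of_int w1\<bar>) (of_int m * \<bar>of_int w0 * eta - of_int w2\<bar>)"
        unfolding dw_def delta3_def using m0 by (simp add: max_mult_distrib_left)
      also have "\<dots> = max \<bar>of_int m * (of_int w0 * xi - of_int w1)\<bar> \<bar>of_int m * (of_int w0 * eta - of_int w2)\<bar>"
        using m0 by (simp add: abs_mult)
      also have "\<dots> = max \<bar>of_int w0 * (of_int m * xi - real_of_int x1)\<bar> \<bar>of_int w0 * (of_int m * eta - real_of_int x2)\<bar>"
        unfolding r1 r2 ..
      also have "\<dots> = of_int w0 * dxx"
        unfolding dxx_def delta3_def using m0 by (simp add: abs_mult max_mult_distrib_left)
      finally show ?thesis .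
    qed
    moreover have "of_int w0 * dxx \<le> of_int m * dxx" using w0m dxx0 by (intro mult_right_mono) auto
    ultimately have "of_int m * dw \<le> of_int m * dxx" by simp
    then have "dw \<le> dxx" using m2 by simp
    then show False using lt by simp
  qed
  have prim: "(m,x1,x2) \<noteq> smul g y" if g2: "2 \<le> g" for g y
  proof
    assume eq: "(m,x1,x2) = smul g y"
    obtain y0 y1 y2 where yy: "y = (y0,y1,y2)" by (cases y) blast
    have e: "m = g * y0" "x1 = g * y1" "x2 = g * y2" using eq yy by simp_all
    have y0p: "0 < y0" using e(1) m2 g2 by (metis zero_less_mult_iff order.strict_trans2 not_le zero_less_numeral le_less)
    have y0m: "y0 \<le> m - 1"
    proof -
      have "2 * y0 \<le> g * y0" using g2 y0p by (intro mult_right_mono) auto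
      then show ?thesis using e(1) y0p by linarith
    qed
    have "dxx = of_int g * delta3 xi eta y0 y1 y2" unfolding dxx_def e using g2 by (intro delta3_smul) simp
    moreover have "delta3 xi eta y0 y1 y2 \<le> of_int g * delta3 xi eta y0 y1 y2"
      using g2 delta3_nonneg[of xi eta y0 y1 y2] by (simp add: mult_le_cancel_right1)
    moreover have "Delta xi eta (of_int m) < delta3 xi eta y0 y1 y2" using strict[of y0 y1 y2] y0p y0m by simp
    ultimately show False using dx unfolding dxx_def by simp
  qed
  have cb: "\<bar>real_of_int m\<bar> \<le> 6 * S * of_int (dt (cr (m,x1,x2) (w0,w1,w2)) (cr (m,x1,x2) (w0,w1,w2)))"
    using conic_bound[OF li pnz root cz q0 prim] unfolding S_def by simp
  have nb: "real_of_int (dt (cr (m,x1,x2) (w0,w1,w2)) (cr (m,x1,x2) (w0,w1,w2))) \<le> 3 * (Mc * mr * dw)^2"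
    using crxw_bound[of m mr w0 xi eta x1 x2 w1 w2] m2 w(1) w0m lt dw1 unfolding mr_def Mc_def dw_def dxx_def
    by simp
  have S0: "0 \<le> S" unfolding S_def by (cases p) simp
  have m1: "mr \<le> 18 * S * Mc^2 * (mr^2 * dw^2)"
  proof -
    have "6 * S * real_of_int (dt (cr (m,x1,x2) (w0,w1,w2)) (cr (m,x1,x2) (w0,w1,w2))) \<le> 6 * S * (3 * (Mc * mr * dw)^2)"
      using nb S0 by (intro mult_left_mono) auto
    moreover have "mr \<le> \<bar>real_of_int m\<bar>" unfolding mr_def by simp
    ultimately have "mr \<le> 6 * S * (3 * (Mc * mr * dw)^2)" using cb by linarith
    also have "\<dots> = 18 * S * Mc^2 * (mr^2 * dw^2)" by (simp add: power_mult_distrib)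
    finally show ?thesis .
  qed
  have mpos: "0 < mr" using mr2 by simp
  have dw0: "0 \<le> dw" unfolding dw_def by (rule delta3_nonneg)
  have dwb: "dw \<le> 2 powr lam * mr powr (- lam)"
  proof -
    have "(mr - 1/2) powr (- lam) \<le> (mr / 2) powr (- lam)" using mr2 lam by (intro powr_mono2') auto
    also have "(mr / 2) powr (- lam) = mr powr (- lam) / 2 powr (- lam)" by (rule powr_divide)
    also have "2 powr (- lam) = inverse (2 powr lam)" by (rule powr_minus)
    also have "mr powr (- lam) / inverse (2 powr lam) = 2 powr lam * mr powr (- lam)"
      by (simp only: divide_inverse inverse_inverse_eq mult.commute)
    finally show ?thesis using dwub by simp
  qed
  have dw2: "dw^2 \<le> 2 powr (2 * lam) * mr powr (- 2 * lam)"
  proof -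
    have "dw^2 \<le> (2 powr lam * mr powr (- lam))^2" using dwb dw0 by (intro power_mono) auto
    also have "\<dots> = (2 powr lam * 2 powr lam) * (mr powr (- lam) * mr powr (- lam))"
      by (simp add: power2_eq_square algebra_simps)
    also have "\<dots> = 2 powr (2 * lam) * mr powr (- 2 * lam)"
      by (simp add: powr_add[symmetric])
    finally show ?thesis .
  qed
  have mm: "mr^2 * dw^2 \<le> 2 powr (2 * lam) * mr powr (2 - 2 * lam)"
  proof -
    have e: "mr^2 = mr powr 2" using mpos by simp
    have e2: "mr powr 2 * mr powr (- 2 * lam) = mr powr (2 - 2 * lam)"
    proof -
      have "mr powr 2 * mr powr (- 2 * lam) = mr powr (2 + - 2 * lam)" by (rule powr_add[symmetric])
      also have "(2::real) + - 2 * lam = 2 - 2 * lam" by simp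
      finally show ?thesis .
    qed
    have "mr^2 * dw^2 \<le> mr^2 * (2 powr (2 * lam) * mr powr (- 2 * lam))"
      using dw2 by (intro mult_left_mono) auto
    also have "mr^2 * (2 powr (2 * lam) * mr powr (- 2 * lam)) = 2 powr (2 * lam) * (mr powr 2 * mr powr (- 2 * lam))"
      unfolding e by (simp only: ac_simps)
    also have "\<dots> = 2 powr (2 * lam) * mr powr (2 - 2 * lam)" unfolding e2 ..
    finally show ?thesis .
  qed
  define K7 where "K7 = 18 * S * Mc^2 * 2 powr (2 * lam)"
  have m3: "mr \<le> K7 * mr powr (2 - 2 * lam)"
  proof -
    have "0 \<le> 18 * S * Mc^2" using S0 by simp
    then have "18 * S * Mc^2 * (mr^2 * dw^2) \<le> 18 * S * Mc^2 * (2 powr (2 * lam) * mr powr (2 - 2 * lam))"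
      using mm by (intro mult_left_mono) auto
    then show ?thesis using m1 unfolding K7_def by (simp add: algebra_simps)
  qed
  have "mr powr (2 * lam - 1) = mr powr (1 - (2 - 2 * lam))" by simp
  also have "\<dots> = mr powr 1 / mr powr (2 - 2 * lam)" by (rule powr_diff)
  also have "\<dots> = mr / mr powr (2 - 2 * lam)" using mpos by simp
  also have "\<dots> \<le> K7" using m3 mpos by (simp add: divide_le_eq)
  finally show ?thesis unfolding K7_def S_def Mc_def mr_def .
qed

theorem lemma3p3:
  fixes xi eta lam :: real and f :: "rat poly poly"
  assumes indep: "lin_indep_1 xi eta"
    and irr: "irreducible f" and deg: "total_degree f = 2" and notx: "\<not> in_Qx f"
    and root: "eval2 f xi eta = 0"
    and lam: "lam > 1/2"
    and approx: "\<exists>X0. \<forall>X. X \<ge> 1 \<and> X \<ge> X0 \<longrightarrow>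
        (\<exists>x0 x1 x2 :: int. (x0, x1, x2) \<noteq> (0, 0, 0) \<and> \<bar>of_int x0\<bar> \<le> X \<and>
            \<bar>of_int x0 * xi - of_int x1\<bar> \<le> X powr (- lam) \<and>
            \<bar>of_int x0 * eta - of_int x2\<bar> \<le> X powr (- lam))"
  shows "\<exists>c > 0. \<forall>a \<in> Xset xi eta. \<forall>b \<in> Xset xi eta.
           a < b \<and> (\<forall>z \<in> Xset xi eta. \<not> (a < z \<and> z < b)) \<longrightarrow> b powr lam \<le> c * a"
proof -
  obtain X0 where X0: "\<forall>X. X \<ge> 1 \<and> X \<ge> X0 \<longrightarrow>
        (\<exists>x0 x1 x2 :: int. (x0, x1, x2) \<noteq> (0, 0, 0) \<and> \<bar>of_int x0\<bar> \<le> X \<and>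
            \<bar>of_int x0 * xi - of_int x1\<bar> \<le> X powr (- lam) \<and>
            \<bar>of_int x0 * eta - of_int x2\<bar> \<le> X powr (- lam))"
    using approx by blast
  have lam0: "0 < lam" using lam by simp
  have UB: "Delta xi eta X \<le> X powr (- lam)" if "1 < X" "X0 \<le> X" for X
    using UB_lemma[OF lam0 X0 that] .
  have fnz: "f \<noteq> 0" using irr by auto
  obtain p D where pnz: "p \<noteq> (0,0,0,0,0,0)" and Dpos: "D > 0"
    and pD: "\<forall>xi eta. qf (of6 p) (1,xi,eta) = D * eval2 f xi eta"
    using extract_qf[OF deg fnz] by blast
  have root': "qf (of6 p) (1, xi, eta) = 0" using pD root by simp
  define S where "S = real_of_int (sabs p)"
  define M where "M = 1 + \<bar>xi\<bar> + \<bar>eta\<bar>"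
  define K where "K = S * (2 * M + 1)"
  define K7 where "K7 = 18 * S * (4 * M + 2)^2 * 2 powr (2 * lam)"
  define B1 where "B1 = max X0 1 + 2"
  define T where "T = K7 powr (1 / (2 * lam - 1))"
  define A0 where "A0 = max T B1 + 1"
  define d0 where "d0 = Delta xi eta A0"
  have S0: "0 \<le> S" unfolding S_def by (cases p) simp
  have M1: "1 \<le> M" unfolding M_def by simp
  have K0: "0 \<le> K" unfolding K_def using S0 M1 by simp
  have K70: "0 \<le> K7" unfolding K7_def using S0 by simp
  have B13: "3 \<le> B1" "X0 + 2 \<le> B1" unfolding B1_def by auto
  have A0g: "B1 + 1 \<le> A0" "T < A0" unfolding A0_def by auto
  have d0pos: "0 < d0" unfolding d0_def using A0g B13 by (intro Delta_pos[OF indep]) auto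
  define c where "c = max (max (B1 powr lam) (2 powr lam / d0)) (2 powr lam * K) + 1"
  have cb: "B1 powr lam \<le> c" "2 powr lam / d0 \<le> c" "2 powr lam * K \<le> c" unfolding c_def by auto
  have cpos: "0 < c" using cb(1) unfolding c_def by (smt (verit) powr_ge_zero)
  have main: "b powr lam \<le> c * a"
    if ha: "a \<in> Xset xi eta" and hb: "b \<in> Xset xi eta" and ab: "a < b"
      and none: "\<forall>z \<in> Xset xi eta. \<not> (a < z \<and> z < b)" for a b
  proof -
    obtain m n where mn: "a = of_int m" "b = of_int n" "1 \<le> m" "m < n"
      and mD: "m = 1 \<or> Delta xi eta (of_int m) < Delta xi eta (of_int (m - 1))"
      and const: "\<forall>X. of_int m \<le> X \<and> X < of_int n \<longrightarrow> Delta xi eta X = Delta xi eta (of_int m)"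
      using consec[OF indep ha hb ab none] by blast
    have a1: "1 \<le> a" using mn by simp
    have ca: "c \<le> c * a" using cpos a1 by simp
    show ?thesis
    proof (cases "of_int n \<le> B1")
      case True
      have "b powr lam \<le> B1 powr lam" using True mn lam0 by (intro powr_mono2) auto
      also have "\<dots> \<le> c" by (rule cb)
      finally show ?thesis using ca by linarith
    next
      case False
      define Xh where "Xh = real_of_int n - 1/2"
      have Xh1: "1 < Xh" "X0 \<le> Xh" using False B13 unfolding Xh_def by auto
      define Dm where "Dm = Delta xi eta (of_int m)"
      have Dm_eq: "Dm = Delta xi eta Xh"
      proof -
        have "of_int m \<le> Xh" "Xh < of_int n" using mn unfolding Xh_def by auto
        then have "Delta xi eta Xh = Delta xi eta (of_int m)" using const by blast
        then show ?thesis unfolding Dm_def by simp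
      qed
      have Dmpos: "0 < Dm" unfolding Dm_def using mn by (intro Delta_pos[OF indep]) auto
      have b0: "0 < b" using mn by simp
      have nb: "b powr lam \<le> 2 powr lam / Dm"
      proof -
        have "Dm \<le> Xh powr (- lam)" unfolding Dm_eq using Xh1 by (rule UB)
        also have "Xh powr (- lam) \<le> (b / 2) powr (- lam)"
          using b0 mn lam0 unfolding Xh_def by (intro powr_mono2') auto
        also have "(b / 2) powr (- lam) = b powr (- lam) / 2 powr (- lam)" by (rule powr_divide)
        also have "2 powr (- lam) = inverse (2 powr lam)" by (rule powr_minus)
        also have "b powr (- lam) / inverse (2 powr lam) = 2 powr lam * b powr (- lam)"
          by (simp only: divide_inverse inverse_inverse_eq mult.commute)
        finally have h: "Dm \<le> 2 powr lam * b powr (- lam)" .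
        have bl: "0 < b powr lam" using b0 by simp
        have "Dm * b powr lam \<le> 2 powr lam * b powr (- lam) * b powr lam"
          using h bl by (intro mult_right_mono) auto
        also have "\<dots> = 2 powr lam * (b powr (- lam) * b powr lam)" by (simp only: mult.assoc)
        also have "b powr (- lam) * b powr lam = 1"
        proof -
          have "b powr (- lam) * b powr lam = b powr (- lam + lam)" by (rule powr_add[symmetric])
          then show ?thesis using b0 by simp
        qed
        finally have "Dm * b powr lam \<le> 2 powr lam" by simp
        then show ?thesis using Dmpos by (simp add: le_divide_eq mult.commute)
      qed
      show ?thesis
      proof (cases "real_of_int m < A0")
        case True
        have "d0 \<le> Dm" unfolding d0_def Dm_def using True mn by (intro Delta_anti) auto
        then have "2 powr lam / Dm \<le> 2 powr lam / d0" using d0pos by (intro divide_left_mono) auto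
        then show ?thesis using nb cb(2) ca by linarith
      next
        case False
        have mA: "A0 \<le> real_of_int m" using False by simp
        have m2: "2 \<le> m" using mA A0g B13 by simp
        have Dlt: "Dm < Delta xi eta (of_int (m - 1))" using mD m2 unfolding Dm_def by auto
        obtain x0 x1 x2 where x: "1 \<le> x0" "of_int x0 \<le> (of_int m :: real)" "Dm = delta3 xi eta x0 x1 x2"
          using Delta_min[of "of_int m" xi eta] mn unfolding Dm_def by auto
        have strict: "Dm < delta3 xi eta z0 z1 z2" if "1 \<le> z0" "z0 \<le> m - 1" for z0 z1 z2
        proof -
          have "Delta xi eta (of_int (m - 1)) \<le> delta3 xi eta z0 z1 z2" using that by (intro Delta_le) auto
          then show ?thesis using Dlt by simp
        qed
        have x0m: "x0 = m"
        proof (rule ccontr)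
          assume "x0 \<noteq> m"
          then have "x0 \<le> m - 1" using x(2) by simp
          then have "Dm < delta3 xi eta x0 x1 x2" using strict x(1) by blast
          then show False using x(3) by simp
        qed
        have dx: "delta3 xi eta m x1 x2 = Delta xi eta (of_int m)" using x x0m unfolding Dm_def by simp
        have mX0: "X0 \<le> of_int m - 1/2" using mA A0g B13 by simp
        have qnz: "qf p (m,x1,x2) \<noteq> 0"
        proof
          assume q0: "qf p (m,x1,x2) = 0"
          have "of_int m powr (2 * lam - 1) \<le> K7"
            using onconic[OF indep pnz root' lam UB m2 mX0 dx _ q0] strict unfolding K7_def S_def M_def Dm_def
            by blast
          moreover have "T powr (2 * lam - 1) < of_int m powr (2 * lam - 1)"
            using lam A0g mA unfolding T_def by (intro powr_less_mono2) auto
          moreover have "T powr (2 * lam - 1) = K7"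
          proof -
            have "T powr (2 * lam - 1) = K7 powr (1 / (2 * lam - 1) * (2 * lam - 1))"
              unfolding T_def by (rule powr_powr)
            also have "1 / (2 * lam - 1) * (2 * lam - 1) = 1" using lam by simp
            finally show ?thesis using K70 by simp
          qed
          ultimately show False by simp
        qed
        have q1: "1 \<le> \<bar>real_of_int (qf p (m,x1,x2))\<bar>" using qnz by linarith
        have Dm1: "Dm \<le> 1" using Delta_half[of "of_int m" xi eta] mn unfolding Dm_def by simp
        have "\<bar>real_of_int (qf p (m,x1,x2))\<bar> \<le> K * (of_int m * Dm)"
          using Fbound[OF root' _ , of m x1 x2] mn dx Dm1 unfolding K_def S_def M_def Dm_def by simp
        then have kb: "1 \<le> K * (of_int m * Dm)" using q1 by linarith
        have "2 powr lam / Dm \<le> 2 powr lam * K * of_int m"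
        proof -
          have "2 powr lam \<le> 2 powr lam * (K * (of_int m * Dm))" using kb by simp
          then show ?thesis using Dmpos by (simp add: divide_le_eq algebra_simps)
        qed
        also have "\<dots> \<le> c * of_int m" using cb(3) mn by (intro mult_right_mono) auto
        also have "\<dots> = c * a" using mn by simp
        finally show ?thesis using nb by linarith
      qed
    qed
  qed
  show ?thesis using cpos main by blast
qed

end
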